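(* Consider a $d$-regular simple graph ($d\ge3$) on $B$ bonds, quantised with unitary vertex scattering matrices without back-scattering (all diagonal entries zero). Let $T$ be a positive integer, $\kappa>0$, and $f\in\mathbb{C}^{2B}$ with $|f_b|\le\kappa$ for each $b$ and $\mathrm{Tr}\,\mathrm{Op}(f)=\sum_bf_b=0$. Then there is a constant $c$ depending only on $d$ such that $$V(f,B)\le\frac1{2BT}\sum_{b}|f_b|^2+\frac1B\sum_{t=1}^T\hat w_T(t)\Big(\langle f,M^tf\rangle_{\mathbb{C}^{2B}}+c\,\kappa^2(d-1)^t|\mathcal{C}_{B,2T}|\Big).$$
   Context: Directed bonds, $o(b)$, $t(b)$, vertex matrices $\sigma_v$, the bond scattering matrix $S$ ($S_{bc}=0$ unless $t(b)=o(c)$, otherwise the entry of $\sigma_{t(b)}$ in the row of the bond of $c$ and column of the bond of $b$) and $U(k)_{bc}=e^{ikL_b}S_{bc}$ are as usual for quantum graphs with bond lengths $L_b>0$. $M_{bc}=|S_{bc}|^2$. $\mathrm{Op}(f)=\mathrm{diag}(f)$, $\langle x,y\rangle=\sum\bar x_iy_i$. With $\{\phi_j(k)\}$ an orthonormal eigenbasis of $U(k)$, $V(f,B)=\frac1{2B}\lim_{K\to\infty}\frac1K\int_0^K\sum_{j=1}^{2B}|\langle\phi_j(k),\mathrm{Op}(f)\phi_j(k)\rangle-\frac1{2B}\mathrm{Tr}\,\mathrm{Op}(f)|^2dk$. $\hat w_T(t)=\frac1T(1-\frac{|t|}T)$ for $|t|<T$ and $0$ otherwise. A cycle is a closed path without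 back-tracking; $\mathcal{C}_{B,t}$ is the set of bonds on a cycle of length at most $t$. *)

theory Defs
  imports "HOL-Analysis.Analysis"
begin

text \<open>Directed bonds are pairs (u,v) with E u v, o(b) = fst b,
t(b) = snd b.\<close>

definition simple_graph :: "nat set \<Rightarrow> (nat \<Rightarrow> nat \<Rightarrow> bool) \<Rightarrow> bool" where
  "simple_graph Vs E \<longleftrightarrow> finite Vs \<and> (\<forall>u v. E u v \<longrightarrow> u \<in> Vs \<and> v \<in> Vs)
     \<and> (\<forall>u v. E u v \<longrightarrow> E v u) \<and> (\<forall>u. \<not> E u u)"

definition regular_graph :: "nat set \<Rightarrow> (nat \<Rightarrow> nat \<Rightarrow> bool) \<Rightarrow> nat \<Rightarrow> bool" where
  "regular_graph Vs E d \<longleftrightarrow> simple_graph Vs E \<and> (\<forall>v\<in>Vs. card {w. E v w} = d)"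

definition dbonds :: "(nat \<Rightarrow> nat \<Rightarrow> bool) \<Rightarrow> (nat \<times> nat) set" where
  "dbonds E = {(u, v). E u v}"

definition ubond :: "nat \<times> nat \<Rightarrow> nat set" where
  "ubond b = {fst b, snd b}"

definition ubonds :: "(nat \<Rightarrow> nat \<Rightarrow> bool) \<Rightarrow> nat set set" where
  "ubonds E = ubond ` dbonds E"

definition nbonds :: "(nat \<Rightarrow> nat \<Rightarrow> bool) \<Rightarrow> nat" where
  "nbonds E = card (ubonds E)"

text \<open>Vertex scattering matrices: \<open>\<sigma> v w u\<close> is the entry of \<open>\<sigma>\<^sub>v\<close> in the row of the
bond {v,w} and the column of the bond {v,u} (u, w neighbours of v).\<close>
definition unitary_on :: "nat set \<Rightarrow> (nat \<Rightarrow> nat \<Rightarrow> complex) \<Rightarrow> bool" where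
  "unitary_on N A \<longleftrightarrow>
     (\<forall>u\<in>N. \<forall>u'\<in>N. (\<Sum>w\<in>N. cnj (A w u) * A w u') = (if u = u' then 1 else 0)) \<and>
     (\<forall>w\<in>N. \<forall>w'\<in>N. (\<Sum>u\<in>N. A w u * cnj (A w' u)) = (if w = w' then 1 else 0))"

definition vertex_matrices_ok ::
  "nat set \<Rightarrow> (nat \<Rightarrow> nat \<Rightarrow> bool) \<Rightarrow> (nat \<Rightarrow> nat \<Rightarrow> nat \<Rightarrow> complex) \<Rightarrow> bool" where
  "vertex_matrices_ok Vs E \<sigma> \<longleftrightarrow> (\<forall>v\<in>Vs. unitary_on {w. E v w} (\<sigma> v))"

definition no_backscattering ::
  "nat set \<Rightarrow> (nat \<Rightarrow> nat \<Rightarrow> bool) \<Rightarrow> (nat \<Rightarrow> nat \<Rightarrow> nat \<Rightarrow> complex) \<Rightarrow> bool" where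
  "no_backscattering Vs E \<sigma> \<longleftrightarrow> (\<forall>v\<in>Vs. \<forall>u. E v u \<longrightarrow> \<sigma> v u u = 0)"

definition Smat :: "(nat \<Rightarrow> nat \<Rightarrow> nat \<Rightarrow> complex) \<Rightarrow> nat \<times> nat \<Rightarrow> nat \<times> nat \<Rightarrow> complex" where
  "Smat \<sigma> b c = (if snd b = fst c then \<sigma> (snd b) (snd c) (fst b) else 0)"

text \<open>Lengths are attached to undirected bonds, so \<open>L\<^sub>b\<close> = \<open>Lu (ubond b)\<close>.\<close>
definition Umat :: "(nat \<Rightarrow> nat \<Rightarrow> nat \<Rightarrow> complex) \<Rightarrow> (nat set \<Rightarrow> real) \<Rightarrow> real
     \<Rightarrow> nat \<times> nat \<Rightarrow> nat \<times> nat \<Rightarrow> complex" where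
  "Umat \<sigma> Lu k b c = exp (\<i> * complex_of_real (k * Lu (ubond b))) * Smat \<sigma> b c"

definition Mmat :: "(nat \<Rightarrow> nat \<Rightarrow> nat \<Rightarrow> complex) \<Rightarrow> nat \<times> nat \<Rightarrow> nat \<times> nat \<Rightarrow> real" where
  "Mmat \<sigma> b c = (cmod (Smat \<sigma> b c))\<^sup>2"

fun mpow :: "'i set \<Rightarrow> ('i \<Rightarrow> 'i \<Rightarrow> real) \<Rightarrow> nat \<Rightarrow> 'i \<Rightarrow> 'i \<Rightarrow> real" where
  "mpow I A 0 = (\<lambda>b c. if b = c then 1 else 0)"
| "mpow I A (Suc t) = (\<lambda>b c. \<Sum>e\<in>I. A b e * mpow I A t e c)"

definition cinner :: "'i set \<Rightarrow> ('i \<Rightarrow> complex) \<Rightarrow> ('i \<Rightarrow> complex) \<Rightarrow> complex" where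
  "cinner I x y = (\<Sum>i\<in>I. cnj (x i) * y i)"

definition Op :: "('i \<Rightarrow> complex) \<Rightarrow> ('i \<Rightarrow> complex) \<Rightarrow> 'i \<Rightarrow> complex" where
  "Op f x = (\<lambda>i. f i * x i)"

definition Tr_Op :: "'i set \<Rightarrow> ('i \<Rightarrow> complex) \<Rightarrow> complex" where
  "Tr_Op I f = (\<Sum>i\<in>I. f i)"

definition orthonormal_eigenbasis ::
  "'i set \<Rightarrow> nat \<Rightarrow> ('i \<Rightarrow> 'i \<Rightarrow> complex) \<Rightarrow> (nat \<Rightarrow> 'i \<Rightarrow> complex) \<Rightarrow> bool" where
  "orthonormal_eigenbasis I n A \<phi> \<longleftrightarrow>
     (\<forall>j<n. \<forall>j'<n. cinner I (\<phi> j) (\<phi> j') = (if j = j' then 1 else 0)) \<and>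
     (\<forall>j<n. \<exists>ev. \<forall>b\<in>I. (\<Sum>c\<in>I. A b c * \<phi> j c) = ev * \<phi> j b)"

definition var_integrand ::
  "'i set \<Rightarrow> nat \<Rightarrow> ('i \<Rightarrow> complex) \<Rightarrow> (real \<Rightarrow> nat \<Rightarrow> 'i \<Rightarrow> complex) \<Rightarrow> real \<Rightarrow> real" where
  "var_integrand I n f \<phi> k =
     (\<Sum>j<n. (cmod (cinner I (\<phi> k j) (Op f (\<phi> k j)) - Tr_Op I f / of_nat n))\<^sup>2)"

definition w_hat :: "nat \<Rightarrow> int \<Rightarrow> real" where
  "w_hat T t = (if \<bar>t\<bar> < int T then (1 / real T) * (1 - real_of_int \<bar>t\<bar> / real T) else 0)"

definition is_cycle :: "(nat \<Rightarrow> nat \<Rightarrow> bool) \<Rightarrow> (nat \<times> nat) list \<Rightarrow> bool" where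
  "is_cycle E ps \<longleftrightarrow> ps \<noteq> [] \<and> set ps \<subseteq> dbonds E \<and>
     (\<forall>i < length ps. snd (ps ! i) = fst (ps ! ((i + 1) mod length ps)) \<and>
        ps ! ((i + 1) mod length ps) \<noteq> (snd (ps ! i), fst (ps ! i)))"

definition cycle_bonds :: "(nat \<Rightarrow> nat \<Rightarrow> bool) \<Rightarrow> nat \<Rightarrow> nat set set" where
  "cycle_bonds E t = {e. \<exists>ps. is_cycle E ps \<and> length ps \<le> t \<and> e \<in> ubond ` set ps}"

definition rationally_independent :: "nat set set \<Rightarrow> (nat set \<Rightarrow> real) \<Rightarrow> bool" where
  "rationally_independent Es Lu \<longleftrightarrow>
     (\<forall>q :: nat set \<Rightarrow> int. (\<Sum>e\<in>Es. real_of_int (q e) * Lu e) = 0 \<longrightarrow> (\<forall>e\<in>Es. q e = 0))"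

end

theory Submission
  imports Defs
begin


fun cpw :: "'i set \<Rightarrow> ('i \<Rightarrow> 'i \<Rightarrow> 'a::comm_semiring_1) \<Rightarrow> nat \<Rightarrow> 'i \<Rightarrow> 'i \<Rightarrow> 'a" where
  "cpw I A 0 = (\<lambda>b c. if b = c then 1 else 0)"
| "cpw I A (Suc t) = (\<lambda>b c. \<Sum>e\<in>I. A b e * cpw I A t e c)"

lemma mpow_cpw: "mpow I A t = cpw I A t"
  by (induction t) auto

definition walks :: "'i set \<Rightarrow> nat \<Rightarrow> 'i \<Rightarrow> 'i \<Rightarrow> 'i list set" where
  "walks I t p q = {xs. set xs \<subseteq> I \<and> length xs = Suc t \<and> xs ! 0 = p \<and> xs ! t = q}"

definition amp :: "('i \<Rightarrow> 'i \<Rightarrow> 'a::comm_semiring_1) \<Rightarrow> 'i list \<Rightarrow> 'a" where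
  "amp A xs = (\<Prod>i<length xs - 1. A (xs ! i) (xs ! Suc i))"

lemma finite_walks: "finite I \<Longrightarrow> finite (walks I t p q)"
  by (rule finite_subset[OF _ finite_lists_length_eq[of I "Suc t"]]) (auto simp: walks_def)

lemma amp_Cons: "ys \<noteq> [] \<Longrightarrow> amp A (p # ys) = A p (ys ! 0) * amp A ys"
proof -
  assume "ys \<noteq> []"
  then obtain n where n: "length ys = Suc n" by (cases ys) auto
  show ?thesis unfolding amp_def using n
    by (simp add: prod.lessThan_Suc_shift del: prod.lessThan_Suc)
qed

lemma amp_Cons_len: "length ys = Suc n \<Longrightarrow> amp A (p # ys) = A p (ys ! 0) * amp A ys"
  by (rule amp_Cons) auto

lemma walks_Suc_sum:
  assumes fin: "finite I" and p: "p \<in> I"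
  shows "(\<Sum>xs\<in>walks I (Suc t) p q. g xs) = (\<Sum>e\<in>I. \<Sum>ys\<in>walks I t e q. g (p # ys))"
proof -
  define W' where "W' = {ys. set ys \<subseteq> I \<and> length ys = Suc t \<and> ys ! t = q}"
  have fW: "finite W'"
    by (rule finite_subset[OF _ finite_lists_length_eq[OF fin, of "Suc t"]]) (auto simp: W'_def)
  have img: "(\<lambda>ys. ys ! 0) ` W' \<subseteq> I"
    by (auto simp: W'_def)
  have "(\<Sum>e\<in>I. \<Sum>ys\<in>walks I t e q. g (p # ys)) = (\<Sum>e\<in>I. \<Sum>ys\<in>{ys\<in>W'. ys ! 0 = e}. g (p # ys))"
    by (rule sum.cong) (auto simp: walks_def W'_def intro!: sum.cong)
  also have "\<dots> = (\<Sum>ys\<in>W'. g (p # ys))"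
    by (rule sum.group[OF fW fin img])
  also have "\<dots> = (\<Sum>xs\<in>(Cons p) ` W'. g xs)"
    by (subst sum.reindex) (auto simp: inj_on_def)
  also have "(Cons p) ` W' = walks I (Suc t) p q"
  proof
    show "(Cons p) ` W' \<subseteq> walks I (Suc t) p q" using p by (auto simp: W'_def walks_def)
    show "walks I (Suc t) p q \<subseteq> (Cons p) ` W'"
    proof
      fix xs assume xs: "xs \<in> walks I (Suc t) p q"
      then obtain y ys where xy: "xs = y # ys" by (cases xs) (auto simp: walks_def)
      with xs show "xs \<in> (Cons p) ` W'" by (auto simp: walks_def W'_def)
    qed
  qed
  finally show ?thesis by simp
qed

lemma walks_0: "p \<in> I \<Longrightarrow> walks I 0 p q = (if p = q then {[p]} else {})"
  by (auto simp: walks_def length_Suc_conv)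

lemma cpw_walks:
  assumes fin: "finite I" and p: "p \<in> I"
  shows "cpw I A t p q = (\<Sum>xs\<in>walks I t p q. amp A xs)"
  using p
proof (induction t arbitrary: p)
  case 0
  then show ?case by (simp add: walks_0 amp_def)
next
  case (Suc t)
  have "(\<Sum>xs\<in>walks I (Suc t) p q. amp A xs) = (\<Sum>e\<in>I. \<Sum>ys\<in>walks I t e q. amp A (p # ys))"
    by (rule walks_Suc_sum[OF fin Suc.prems])
  also have "\<dots> = (\<Sum>e\<in>I. A p e * (\<Sum>ys\<in>walks I t e q. amp A ys))"
    by (rule sum.cong[OF refl]) (auto simp: sum_distrib_left walks_def amp_Cons_len intro!: sum.cong)
  also have "\<dots> = cpw I A (Suc t) p q"
    using Suc.IH by simp
  finally show ?case by simp
qed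



lemma delta_l: "finite I \<Longrightarrow> b \<in> I \<Longrightarrow> (\<Sum>x\<in>I. (if b = x then 1 else 0) * g x) = (g b :: 'a::comm_semiring_1)"
proof -
  assume "finite I" "b \<in> I"
  have "(\<Sum>x\<in>I. (if b = x then 1 else 0) * g x) = (\<Sum>x\<in>I. if b = x then g x else 0)" by (intro sum.cong) auto
  then show ?thesis using \<open>finite I\<close> \<open>b \<in> I\<close> by simp
qed

lemma delta_r: "finite I \<Longrightarrow> b \<in> I \<Longrightarrow> (\<Sum>x\<in>I. g x * (if x = b then 1 else 0)) = (g b :: 'a::comm_semiring_1)"
proof -
  assume "finite I" "b \<in> I"
  have "(\<Sum>x\<in>I. g x * (if x = b then 1 else 0)) = (\<Sum>x\<in>I. if b = x then g x else 0)" by (intro sum.cong) auto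
  then show ?thesis using \<open>finite I\<close> \<open>b \<in> I\<close> by simp
qed

lemma if01_mult[simp]: "(if P then 1 else 0) * y = (if P then y else (0::'a::comm_semiring_1))" by simp
lemma mult_if01[simp]: "y * (if P then 1 else 0) = (if P then y else (0::'a::comm_semiring_1))" by simp

lemma sum_prod_swap:
  "(\<Sum>c\<in>C. (\<Sum>e\<in>A. F e c) * (\<Sum>e'\<in>B. G e' c)) = (\<Sum>e\<in>A. \<Sum>e'\<in>B. \<Sum>c\<in>C. F e c * G e' c :: 'a::comm_semiring_1)"
proof -
  have "(\<Sum>c\<in>C. (\<Sum>e\<in>A. F e c) * (\<Sum>e'\<in>B. G e' c)) = (\<Sum>c\<in>C. \<Sum>e\<in>A. \<Sum>e'\<in>B. F e c * G e' c)"
    by (simp add: sum_product)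
  also have "\<dots> = (\<Sum>e\<in>A. \<Sum>c\<in>C. \<Sum>e'\<in>B. F e c * G e' c)" by (rule sum.swap)
  also have "\<dots> = (\<Sum>e\<in>A. \<Sum>e'\<in>B. \<Sum>c\<in>C. F e c * G e' c)" by (rule sum.cong[OF refl], rule sum.swap)
  finally show ?thesis .
qed

lemma sum_left_swap:
  "(\<Sum>c\<in>C. (\<Sum>e\<in>A. F e c) * G c) = (\<Sum>e\<in>A. \<Sum>c\<in>C. F e c * G c :: 'a::comm_semiring_1)"
  by (simp add: sum_distrib_right) (rule sum.swap)

lemma sum_right_swap:
  "(\<Sum>c\<in>C. G c * (\<Sum>e\<in>A. F e c)) = (\<Sum>e\<in>A. \<Sum>c\<in>C. G c * F e c :: 'a::comm_semiring_1)"
  by (simp add: sum_distrib_left) (rule sum.swap)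

lemma walks_filter:
  assumes fin: "finite I" and p: "p \<in> I" and it: "i \<le> t"
  shows "(\<Sum>xs\<in>walks I t p q. if xs ! i = e then amp A xs else 0) = cpw I A i p e * cpw I A (t - i) e q"
  using p it
proof (induction i arbitrary: p t)
  case 0
  have "(\<Sum>xs\<in>walks I t p q. if xs ! 0 = e then amp A xs else 0) = (if p = e then (\<Sum>xs\<in>walks I t p q. amp A xs) else 0)"
    by (auto simp: walks_def intro!: sum.cong)
  also have "\<dots> = (if p = e then cpw I A t p q else 0)" using cpw_walks[OF fin 0(1), of A t q] by auto
  finally show ?case by auto
next
  case (Suc i)
  then obtain t' where t: "t = Suc t'" by (cases t) auto
  have "(\<Sum>xs\<in>walks I t p q. if xs ! Suc i = e then amp A xs else 0)
      = (\<Sum>e'\<in>I. \<Sum>ys\<in>walks I t' e' q. if (p # ys) ! Suc i = e then amp A (p # ys) else 0)"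
    unfolding t by (rule walks_Suc_sum[OF fin Suc.prems(1)])
  also have "\<dots> = (\<Sum>e'\<in>I. A p e' * (\<Sum>ys\<in>walks I t' e' q. if ys ! i = e then amp A ys else 0))"
    by (rule sum.cong[OF refl]) (auto simp: sum_distrib_left walks_def amp_Cons_len intro!: sum.cong)
  also have "\<dots> = (\<Sum>e'\<in>I. A p e' * (cpw I A i e' e * cpw I A (t' - i) e q))"
    using Suc.IH Suc.prems t by (intro sum.cong) auto
  also have "\<dots> = cpw I A (Suc i) p e * cpw I A (t - Suc i) e q"
    using t by (simp add: sum_distrib_right mult.assoc)
  finally show ?case .
qed

definition mm :: "'i set \<Rightarrow> ('i \<Rightarrow> 'i \<Rightarrow> 'a::comm_semiring_1) \<Rightarrow> ('i \<Rightarrow> 'i \<Rightarrow> 'a) \<Rightarrow> 'i \<Rightarrow> 'i \<Rightarrow> 'a" where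
  "mm I A B = (\<lambda>b c. \<Sum>e\<in>I. A b e * B e c)"

definition adj :: "('i \<Rightarrow> 'i \<Rightarrow> complex) \<Rightarrow> 'i \<Rightarrow> 'i \<Rightarrow> complex" where
  "adj A = (\<lambda>b c. cnj (A c b))"

definition rows_on :: "'i set \<Rightarrow> ('i \<Rightarrow> 'i \<Rightarrow> complex) \<Rightarrow> bool" where
  "rows_on I U \<longleftrightarrow> (\<forall>b\<in>I. \<forall>b'\<in>I. (\<Sum>c\<in>I. U b c * cnj (U b' c)) = (if b = b' then 1 else 0))"

definition cols_on :: "'i set \<Rightarrow> ('i \<Rightarrow> 'i \<Rightarrow> complex) \<Rightarrow> bool" where
  "cols_on I U \<longleftrightarrow> (\<forall>c\<in>I. \<forall>c'\<in>I. (\<Sum>b\<in>I. cnj (U b c) * U b c') = (if c = c' then 1 else 0))"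

lemma cpw_rows:
  assumes fin: "finite I" and R: "rows_on I U" and b: "b \<in> I" and b': "b' \<in> I"
  shows "(\<Sum>c\<in>I. cpw I U s b c * cnj (cpw I U s b' c)) = (if b = b' then 1 else 0)"
  using b b'
proof (induction s arbitrary: b b')
  case 0
  have "(\<Sum>c\<in>I. cpw I U 0 b c * cnj (cpw I U 0 b' c)) = (\<Sum>c\<in>I. (if b = c then 1 else 0) * (if c = b' then 1 else 0))"
    by (intro sum.cong) auto
  then show ?case using fin 0 by (simp add: delta_l)
next
  case (Suc s)
  have "(\<Sum>c\<in>I. cpw I U (Suc s) b c * cnj (cpw I U (Suc s) b' c))
     = (\<Sum>c\<in>I. (\<Sum>e\<in>I. U b e * cpw I U s e c) * (\<Sum>e'\<in>I. cnj (U b' e') * cnj (cpw I U s e' c)))"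
    by (simp add: cnj_sum)
  also have "\<dots> = (\<Sum>e\<in>I. \<Sum>e'\<in>I. \<Sum>c\<in>I. (U b e * cpw I U s e c) * (cnj (U b' e') * cnj (cpw I U s e' c)))"
    by (rule sum_prod_swap)
  also have "\<dots> = (\<Sum>e\<in>I. \<Sum>e'\<in>I. U b e * cnj (U b' e') * (\<Sum>c\<in>I. cpw I U s e c * cnj (cpw I U s e' c)))"
    by (simp add: sum_distrib_left mult_ac)
  also have "\<dots> = (\<Sum>e\<in>I. \<Sum>e'\<in>I. U b e * cnj (U b' e') * (if e = e' then 1 else 0))"
    using Suc.IH by (intro sum.cong) auto
  also have "\<dots> = (\<Sum>e\<in>I. U b e * cnj (U b' e))"
    using fin by (intro sum.cong refl) simp
  also have "\<dots> = (if b = b' then 1 else 0)" using R Suc.prems by (simp add: rows_on_def)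
  finally show ?case .
qed

lemma cpw_add:
  assumes fin: "finite I" and b: "b \<in> I"
  shows "cpw I U (t + s) b c = (\<Sum>x\<in>I. cpw I U t b x * cpw I U s x c)"
  using b
proof (induction t arbitrary: b)
  case 0
  then show ?case using fin by simp
next
  case (Suc t)
  have "cpw I U (Suc t + s) b c = (\<Sum>e\<in>I. U b e * cpw I U (t + s) e c)" by simp
  also have "\<dots> = (\<Sum>e\<in>I. U b e * (\<Sum>x\<in>I. cpw I U t e x * cpw I U s x c))"
    using Suc.IH by (intro sum.cong) auto
  also have "\<dots> = (\<Sum>e\<in>I. \<Sum>x\<in>I. U b e * (cpw I U t e x * cpw I U s x c))"
    by (simp add: sum_distrib_left)
  also have "\<dots> = (\<Sum>x\<in>I. \<Sum>e\<in>I. U b e * (cpw I U t e x * cpw I U s x c))"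
    by (rule sum.swap)
  also have "\<dots> = (\<Sum>x\<in>I. cpw I U (Suc t) b x * cpw I U s x c)"
    by (simp add: sum_distrib_right mult.assoc)
  finally show ?case .
qed

lemma X_formula:
  assumes fin: "finite I" and R: "rows_on I U" and a: "a \<in> I" and a': "a' \<in> I"
  shows "mm I (cpw I U s) (adj (cpw I U s')) a a'
       = (if s' \<le> s then cpw I U (s - s') a a' else cnj (cpw I U (s' - s) a' a))"
proof (cases "s' \<le> s")
  case True
  then obtain t where s: "s = t + s'" by (metis le_add_diff_inverse2)
  have "mm I (cpw I U s) (adj (cpw I U s')) a a' = (\<Sum>e\<in>I. (\<Sum>x\<in>I. cpw I U t a x * cpw I U s' x e) * cnj (cpw I U s' a' e))"
    unfolding mm_def adj_def s by (intro sum.cong refl) (simp add: cpw_add[OF fin a])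
  also have "\<dots> = (\<Sum>x\<in>I. \<Sum>e\<in>I. cpw I U t a x * cpw I U s' x e * cnj (cpw I U s' a' e))"
    by (rule sum_left_swap)
  also have "\<dots> = (\<Sum>x\<in>I. cpw I U t a x * (\<Sum>e\<in>I. cpw I U s' x e * cnj (cpw I U s' a' e)))"
    by (simp add: sum_distrib_left mult_ac)
  also have "\<dots> = (\<Sum>x\<in>I. cpw I U t a x * (if x = a' then 1 else 0))"
    using cpw_rows[OF fin R _ a'] by (intro sum.cong) auto
  also have "\<dots> = cpw I U t a a'" using fin a' by (simp add: delta_r)
  finally show ?thesis using True s by simp
next
  case False
  then obtain t where s: "s' = t + s" by (metis le_add_diff_inverse2 nat_le_linear)
  have "mm I (cpw I U s) (adj (cpw I U s')) a a' = (\<Sum>e\<in>I. cpw I U s a e * cnj (\<Sum>x\<in>I. cpw I U t a' x * cpw I U s x e))"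
    unfolding mm_def adj_def s by (intro sum.cong refl) (simp add: cpw_add[OF fin a'])
  also have "\<dots> = (\<Sum>e\<in>I. cpw I U s a e * (\<Sum>x\<in>I. cnj (cpw I U t a' x) * cnj (cpw I U s x e)))"
    by (simp add: cnj_sum)
  also have "\<dots> = (\<Sum>x\<in>I. \<Sum>e\<in>I. cpw I U s a e * (cnj (cpw I U t a' x) * cnj (cpw I U s x e)))"
    by (rule sum_right_swap)
  also have "\<dots> = (\<Sum>x\<in>I. cnj (cpw I U t a' x) * (\<Sum>e\<in>I. cpw I U s a e * cnj (cpw I U s x e)))"
    by (simp add: sum_distrib_left mult_ac)
  also have "\<dots> = (\<Sum>x\<in>I. cnj (cpw I U t a' x) * (if a = x then 1 else 0))"
    using cpw_rows[OF fin R a] by (intro sum.cong) auto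
  also have "\<dots> = cnj (cpw I U t a' a)" using fin a by (simp add: delta_r)
  finally show ?thesis using False s by simp
qed



lemma cnj_mult_self: "cnj z * z = complex_of_real ((cmod z)^2)"
  by (subst mult.commute) (rule complex_norm_square[symmetric])

lemma cinner_self: "cinner I x x = complex_of_real (\<Sum>i\<in>I. (cmod (x i))^2)"
  by (simp add: cinner_def cnj_mult_self)

lemma bessel:
  fixes n :: nat
  assumes fin: "finite I"
    and on: "\<forall>j<n. \<forall>j'<n. cinner I (\<phi> j) (\<phi> j') = (if j = j' then 1 else 0)"
  shows "(\<Sum>j<n. (cmod (cinner I (\<phi> j) v))^2) \<le> (\<Sum>i\<in>I. (cmod (v i))^2)"
proof -
  define \<alpha> where "\<alpha> j = cinner I (\<phi> j) v" for j
  define P where "P i = (\<Sum>j<n. \<alpha> j * \<phi> j i)" for i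
  define w where "w i = v i - P i" for i
  have e1: "(\<Sum>i\<in>I. cnj (v i) * P i) = (\<Sum>j<n. \<alpha> j * cnj (\<alpha> j))"
  proof -
    have "(\<Sum>i\<in>I. cnj (v i) * P i) = (\<Sum>i\<in>I. \<Sum>j<n. \<alpha> j * (cnj (v i) * \<phi> j i))"
      by (simp add: P_def sum_distrib_left mult_ac)
    also have "\<dots> = (\<Sum>j<n. \<Sum>i\<in>I. \<alpha> j * (cnj (v i) * \<phi> j i))" by (rule sum.swap)
    also have "\<dots> = (\<Sum>j<n. \<alpha> j * cnj (\<alpha> j))"
      by (simp add: \<alpha>_def cinner_def sum_distrib_left mult_ac)
    finally show ?thesis .
  qed
  have e2: "(\<Sum>i\<in>I. cnj (P i) * v i) = (\<Sum>j<n. cnj (\<alpha> j) * \<alpha> j)"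
  proof -
    have "(\<Sum>i\<in>I. cnj (P i) * v i) = (\<Sum>i\<in>I. \<Sum>j<n. cnj (\<alpha> j) * (cnj (\<phi> j i) * v i))"
      by (simp add: P_def sum_distrib_left sum_distrib_right mult_ac)
    also have "\<dots> = (\<Sum>j<n. \<Sum>i\<in>I. cnj (\<alpha> j) * (cnj (\<phi> j i) * v i))" by (rule sum.swap)
    also have "\<dots> = (\<Sum>j<n. cnj (\<alpha> j) * \<alpha> j)"
      by (simp add: \<alpha>_def cinner_def sum_distrib_left)
    finally show ?thesis .
  qed
  have e3: "(\<Sum>i\<in>I. cnj (P i) * P i) = (\<Sum>j<n. cnj (\<alpha> j) * \<alpha> j)"
  proof -
    have "(\<Sum>i\<in>I. cnj (P i) * P i) = (\<Sum>i\<in>I. (\<Sum>j<n. cnj (\<alpha> j) * cnj (\<phi> j i)) * (\<Sum>j'<n. \<alpha> j' * \<phi> j' i))"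
      by (simp add: P_def)
    also have "\<dots> = (\<Sum>j<n. \<Sum>j'<n. \<Sum>i\<in>I. (cnj (\<alpha> j) * cnj (\<phi> j i)) * (\<alpha> j' * \<phi> j' i))"
      by (rule sum_prod_swap)
    also have "\<dots> = (\<Sum>j<n. \<Sum>j'<n. cnj (\<alpha> j) * \<alpha> j' * cinner I (\<phi> j) (\<phi> j'))"
      by (simp add: cinner_def sum_distrib_left mult_ac)
    also have "\<dots> = (\<Sum>j<n. \<Sum>j'<n. cnj (\<alpha> j) * \<alpha> j' * (if j = j' then 1 else 0))"
      using on by (intro sum.cong) auto
    also have "\<dots> = (\<Sum>j<n. cnj (\<alpha> j) * \<alpha> j)"
      by (intro sum.cong refl) (use sum.delta'[of "{..<n}" _ "\<lambda>j'. cnj (\<alpha> _) * \<alpha> j'"] in auto)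
    finally show ?thesis .
  qed
  have "cinner I w w = (\<Sum>i\<in>I. cnj (v i) * v i - cnj (v i) * P i - cnj (P i) * v i + cnj (P i) * P i)"
    by (simp add: cinner_def w_def algebra_simps)
  also have "\<dots> = (\<Sum>i\<in>I. cnj (v i) * v i) - (\<Sum>i\<in>I. cnj (v i) * P i) - (\<Sum>i\<in>I. cnj (P i) * v i) + (\<Sum>i\<in>I. cnj (P i) * P i)"
    by (simp only: sum.distrib sum_subtractf)
  also have "\<dots> = cinner I v v - (\<Sum>j<n. cnj (\<alpha> j) * \<alpha> j)"
    unfolding e1 e2 e3 by (simp add: cinner_def mult.commute)
  finally have "cinner I w w = cinner I v v - (\<Sum>j<n. cnj (\<alpha> j) * \<alpha> j)" .
  then have "Re (cinner I w w) = (\<Sum>i\<in>I. (cmod (v i))^2) - (\<Sum>j<n. (cmod (\<alpha> j))^2)"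
    by (simp add: cinner_self cnj_mult_self)
  moreover have "Re (cinner I w w) \<ge> 0" by (simp add: cinner_self sum_nonneg)
  ultimately show ?thesis by (simp add: \<alpha>_def)
qed

lemma bessel1:
  assumes fin: "finite I" and on: "cinner I \<phi> \<phi> = 1"
  shows "(cmod (cinner I \<phi> v))^2 \<le> (\<Sum>i\<in>I. (cmod (v i))^2)"
proof -
  have "\<forall>j::nat<1. \<forall>j'::nat<1. cinner I ((\<lambda>_. \<phi>) j) ((\<lambda>_. \<phi>) j') = (if j = j' then 1 else 0)" using on by (simp add: less_Suc_eq)
  from bessel[OF fin this, of v] show ?thesis by simp
qed

lemma eig_pow:
  assumes fin: "finite I" and ev: "\<forall>b\<in>I. (\<Sum>c\<in>I. U b c * \<phi> c) = l * \<phi> b" and a: "a \<in> I"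
  shows "(\<Sum>c\<in>I. cpw I U s a c * \<phi> c) = l ^ s * \<phi> a"
  using a
proof (induction s arbitrary: a)
  case 0
  then show ?case using fin by simp
next
  case (Suc s)
  have "(\<Sum>c\<in>I. cpw I U (Suc s) a c * \<phi> c) = (\<Sum>e\<in>I. \<Sum>c\<in>I. U a e * cpw I U s e c * \<phi> c)"
    by (simp add: sum_left_swap sum_distrib_left)
  also have "\<dots> = (\<Sum>e\<in>I. U a e * (\<Sum>c\<in>I. cpw I U s e c * \<phi> c))"
    by (simp add: sum_distrib_left mult.assoc)
  also have "\<dots> = (\<Sum>e\<in>I. U a e * (l ^ s * \<phi> e))"
    using Suc.IH by (intro sum.cong) auto
  also have "\<dots> = l ^ s * (\<Sum>e\<in>I. U a e * \<phi> e)"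
    by (simp add: sum_distrib_left mult_ac)
  also have "\<dots> = l ^ Suc s * \<phi> a" using ev Suc.prems by (simp add: mult_ac)
  finally show ?case .
qed

lemma isometry:
  assumes fin: "finite I" and C: "cols_on I U"
  shows "cinner I (\<lambda>b. \<Sum>c\<in>I. U b c * x c) (\<lambda>b. \<Sum>c\<in>I. U b c * x c) = cinner I x x"
proof -
  have "cinner I (\<lambda>b. \<Sum>c\<in>I. U b c * x c) (\<lambda>b. \<Sum>c\<in>I. U b c * x c)
      = (\<Sum>b\<in>I. (\<Sum>c\<in>I. cnj (U b c) * cnj (x c)) * (\<Sum>c'\<in>I. U b c' * x c'))"
    by (simp add: cinner_def)
  also have "\<dots> = (\<Sum>c\<in>I. \<Sum>c'\<in>I. \<Sum>b\<in>I. (cnj (U b c) * cnj (x c)) * (U b c' * x c'))"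
    by (rule sum_prod_swap)
  also have "\<dots> = (\<Sum>c\<in>I. \<Sum>c'\<in>I. cnj (x c) * x c' * (\<Sum>b\<in>I. cnj (U b c) * U b c'))"
    by (simp add: sum_distrib_left mult_ac)
  also have "\<dots> = (\<Sum>c\<in>I. \<Sum>c'\<in>I. cnj (x c) * x c' * (if c = c' then 1 else 0))"
    using C by (intro sum.cong) (auto simp: cols_on_def)
  also have "\<dots> = cinner I x x" using fin by (simp add: cinner_def)
  finally show ?thesis .
qed

lemma eig_abs:
  assumes fin: "finite I" and C: "cols_on I U"
    and ev: "\<forall>b\<in>I. (\<Sum>c\<in>I. U b c * \<phi> c) = l * \<phi> b" and nrm: "cinner I \<phi> \<phi> = 1"
  shows "cmod l = 1"
proof -
  have "cinner I (\<lambda>b. \<Sum>c\<in>I. U b c * \<phi> c) (\<lambda>b. \<Sum>c\<in>I. U b c * \<phi> c) = cinner I (\<lambda>b. l * \<phi> b) (\<lambda>b. l * \<phi> b)"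
    using ev by (simp add: cinner_def)
  also have "\<dots> = cnj l * l * cinner I \<phi> \<phi>" by (simp add: cinner_def sum_distrib_left mult_ac)
  finally have "cnj l * l = 1" using isometry[OF fin C, of \<phi>] nrm by simp
  then have "complex_of_real ((cmod l)^2) = 1" by (metis cnj_mult_self)
  then have "(cmod l)^2 = 1" by (metis of_real_eq_1_iff)
  then show ?thesis by (simp add: power2_eq_1_iff) (smt (verit) norm_ge_zero)
qed



lemma swap4:
  "(\<Sum>b\<in>B. \<Sum>s\<in>S. \<Sum>s'\<in>S'. \<Sum>a\<in>A. \<Sum>a'\<in>A'. g b s s' a a') =
   (\<Sum>s\<in>S. \<Sum>s'\<in>S'. \<Sum>a\<in>A. \<Sum>a'\<in>A'. \<Sum>b\<in>B. (g b s s' a a' :: 'a::comm_monoid_add))"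
proof -
  have "(\<Sum>b\<in>B. \<Sum>s\<in>S. \<Sum>s'\<in>S'. \<Sum>a\<in>A. \<Sum>a'\<in>A'. g b s s' a a') = (\<Sum>s\<in>S. \<Sum>b\<in>B. \<Sum>s'\<in>S'. \<Sum>a\<in>A. \<Sum>a'\<in>A'. g b s s' a a')"
    by (rule sum.swap)
  also have "\<dots> = (\<Sum>s\<in>S. \<Sum>s'\<in>S'. \<Sum>b\<in>B. \<Sum>a\<in>A. \<Sum>a'\<in>A'. g b s s' a a')"
    by (rule sum.cong[OF refl], rule sum.swap)
  also have "\<dots> = (\<Sum>s\<in>S. \<Sum>s'\<in>S'. \<Sum>a\<in>A. \<Sum>b\<in>B. \<Sum>a'\<in>A'. g b s s' a a')"
    by (rule sum.cong[OF refl], rule sum.cong[OF refl], rule sum.swap)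
  also have "\<dots> = (\<Sum>s\<in>S. \<Sum>s'\<in>S'. \<Sum>a\<in>A. \<Sum>a'\<in>A'. \<Sum>b\<in>B. g b s s' a a')"
    by (rule sum.cong[OF refl], rule sum.cong[OF refl], rule sum.cong[OF refl], rule sum.swap)
  finally show ?thesis .
qed

lemma swap2:
  "(\<Sum>c\<in>C. \<Sum>s\<in>S. \<Sum>a\<in>A. g c s a) = (\<Sum>s\<in>S. \<Sum>a\<in>A. \<Sum>c\<in>C. (g c s a :: 'a::comm_monoid_add))"
proof -
  have "(\<Sum>c\<in>C. \<Sum>s\<in>S. \<Sum>a\<in>A. g c s a) = (\<Sum>s\<in>S. \<Sum>c\<in>C. \<Sum>a\<in>A. g c s a)" by (rule sum.swap)
  also have "\<dots> = (\<Sum>s\<in>S. \<Sum>a\<in>A. \<Sum>c\<in>C. g c s a)" by (rule sum.cong[OF refl], rule sum.swap)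
  finally show ?thesis .
qed

lemma cmod_sq_Re: "(cmod z)^2 = Re (z * cnj z)"
  by (simp add: complex_norm_square[symmetric] del: of_real_power)

lemma HS_identity:
  fixes T :: nat and P :: "nat \<Rightarrow> 'i \<Rightarrow> 'i \<Rightarrow> complex"
  assumes fin: "finite I"
  shows "(\<Sum>b\<in>I. \<Sum>c\<in>I. (cmod (\<Sum>s<T. \<Sum>a\<in>I. cnj (P s a b) * f a * P s a c))^2)
     = (\<Sum>s<T. \<Sum>s'<T. \<Sum>a\<in>I. \<Sum>a'\<in>I. Re (f a * cnj (f a')) * (cmod (\<Sum>c\<in>I. P s a c * cnj (P s' a' c)))^2)"
proof -
  define G where "G b c = (\<Sum>s<T. \<Sum>a\<in>I. cnj (P s a b) * f a * P s a c)" for b c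
  define X where "X s s' a a' = (\<Sum>c\<in>I. P s a c * cnj (P s' a' c))" for s s' a a'
  have inner: "(\<Sum>b\<in>I. \<Sum>c\<in>I. (cnj (P s a b) * f a * P s a c) * cnj (cnj (P s' a' b) * f a' * P s' a' c))
      = f a * cnj (f a') * (cnj (X s s' a a') * X s s' a a')" for s s' a a'
  proof -
    have "cnj (X s s' a a') * X s s' a a' = (\<Sum>b\<in>I. cnj (P s a b) * P s' a' b) * (\<Sum>c\<in>I. P s a c * cnj (P s' a' c))"
      by (simp add: X_def)
    also have "\<dots> = (\<Sum>b\<in>I. \<Sum>c\<in>I. cnj (P s a b) * P s' a' b * (P s a c * cnj (P s' a' c)))"
      by (simp add: sum_product)
    finally show ?thesis
      by (simp add: sum_distrib_left mult_ac)
  qed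
  have "(\<Sum>b\<in>I. \<Sum>c\<in>I. G b c * cnj (G b c))
      = (\<Sum>b\<in>I. \<Sum>c\<in>I. \<Sum>s<T. \<Sum>s'<T. \<Sum>a\<in>I. \<Sum>a'\<in>I.
            (cnj (P s a b) * f a * P s a c) * cnj (cnj (P s' a' b) * f a' * P s' a' c))"
    unfolding G_def by (simp only: cnj_sum sum_product)
  also have "\<dots> = (\<Sum>b\<in>I. \<Sum>s<T. \<Sum>s'<T. \<Sum>a\<in>I. \<Sum>a'\<in>I. \<Sum>c\<in>I.
            (cnj (P s a b) * f a * P s a c) * cnj (cnj (P s' a' b) * f a' * P s' a' c))"
    by (rule sum.cong[OF refl], rule swap4)
  also have "\<dots> = (\<Sum>s<T. \<Sum>s'<T. \<Sum>a\<in>I. \<Sum>a'\<in>I. \<Sum>b\<in>I. \<Sum>c\<in>I.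
            (cnj (P s a b) * f a * P s a c) * cnj (cnj (P s' a' b) * f a' * P s' a' c))"
    by (rule swap4)
  also have "\<dots> = (\<Sum>s<T. \<Sum>s'<T. \<Sum>a\<in>I. \<Sum>a'\<in>I. f a * cnj (f a') * (cnj (X s s' a a') * X s s' a a'))"
    by (simp only: inner)
  finally have eq: "(\<Sum>b\<in>I. \<Sum>c\<in>I. G b c * cnj (G b c)) = (\<Sum>s<T. \<Sum>s'<T. \<Sum>a\<in>I. \<Sum>a'\<in>I. f a * cnj (f a') * (cnj (X s s' a a') * X s s' a a'))" .
  have "(\<Sum>b\<in>I. \<Sum>c\<in>I. (cmod (G b c))^2) = Re (\<Sum>b\<in>I. \<Sum>c\<in>I. G b c * cnj (G b c))"
    by (simp add: cmod_sq_Re)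
  also have "\<dots> = (\<Sum>s<T. \<Sum>s'<T. \<Sum>a\<in>I. \<Sum>a'\<in>I. Re (f a * cnj (f a')) * (cmod (X s s' a a'))^2)"
    unfolding eq by (simp add: cnj_mult_self del: of_real_power)
  finally show ?thesis by (simp add: X_def G_def)
qed

lemma pointwise:
  fixes T n :: nat
  assumes fin: "finite I" and R: "rows_on I U" and C: "cols_on I U"
    and on: "\<forall>j<n. \<forall>j'<n. cinner I (\<phi> j) (\<phi> j') = (if j = j' then 1 else 0)"
    and ev: "\<forall>j<n. \<exists>l. \<forall>b\<in>I. (\<Sum>c\<in>I. U b c * \<phi> j c) = l * \<phi> j b"
    and T: "T > 0"
  shows "(\<Sum>j<n. (cmod (cinner I (\<phi> j) (Op f (\<phi> j))))^2)
    \<le> (1 / (real T)^2) * (\<Sum>s<T. \<Sum>s'<T. \<Sum>a\<in>I. \<Sum>a'\<in>I. Re (f a * cnj (f a')) *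
          (cmod (mm I (cpw I U s) (adj (cpw I U s')) a a'))^2)"
proof -
  define P where "P = cpw I U"
  define G where "G b c = (\<Sum>s<T. \<Sum>a\<in>I. cnj (P s a b) * f a * P s a c)" for b c
  define Gv where "Gv x b = (\<Sum>c\<in>I. G b c * x c)" for x b
  have step1: "cinner I (\<phi> j) (Gv (\<phi> j)) = of_nat T * cinner I (\<phi> j) (Op f (\<phi> j))" if j: "j < n" for j
  proof -
    obtain l where l: "\<forall>b\<in>I. (\<Sum>c\<in>I. U b c * \<phi> j c) = l * \<phi> j b" using ev j by blast
    have nrm: "cinner I (\<phi> j) (\<phi> j) = 1" using on j by simp
    have l1: "cmod l = 1" by (rule eig_abs[OF fin C l nrm])
    have pw: "(\<Sum>c\<in>I. P s a c * \<phi> j c) = l ^ s * \<phi> j a" if "a \<in> I" for s a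
      unfolding P_def by (rule eig_pow[OF fin l that])
    have Gv: "Gv (\<phi> j) b = (\<Sum>s<T. \<Sum>a\<in>I. cnj (P s a b) * f a * (l ^ s * \<phi> j a))" for b
    proof -
      have "Gv (\<phi> j) b = (\<Sum>c\<in>I. \<Sum>s<T. \<Sum>a\<in>I. cnj (P s a b) * f a * (P s a c * \<phi> j c))"
        by (simp add: Gv_def G_def sum_distrib_right sum_distrib_left mult_ac)
      also have "\<dots> = (\<Sum>s<T. \<Sum>a\<in>I. \<Sum>c\<in>I. cnj (P s a b) * f a * (P s a c * \<phi> j c))"
        by (rule swap2)
      also have "\<dots> = (\<Sum>s<T. \<Sum>a\<in>I. cnj (P s a b) * f a * (\<Sum>c\<in>I. P s a c * \<phi> j c))"
        by (simp add: sum_distrib_left)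
      also have "\<dots> = (\<Sum>s<T. \<Sum>a\<in>I. cnj (P s a b) * f a * (l ^ s * \<phi> j a))"
        using pw by (intro sum.cong) auto
      finally show ?thesis .
    qed
    have "cinner I (\<phi> j) (Gv (\<phi> j)) = (\<Sum>b\<in>I. \<Sum>s<T. \<Sum>a\<in>I. cnj (\<phi> j b) * (cnj (P s a b) * f a * (l ^ s * \<phi> j a)))"
      by (simp add: cinner_def Gv sum_distrib_left)
    also have "\<dots> = (\<Sum>s<T. \<Sum>a\<in>I. \<Sum>b\<in>I. cnj (\<phi> j b) * (cnj (P s a b) * f a * (l ^ s * \<phi> j a)))"
      by (rule swap2)
    also have "\<dots> = (\<Sum>s<T. \<Sum>a\<in>I. f a * (l ^ s * \<phi> j a) * cnj (\<Sum>b\<in>I. P s a b * \<phi> j b))"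
      by (simp add: sum_distrib_left mult_ac)
    also have "\<dots> = (\<Sum>s<T. \<Sum>a\<in>I. f a * (l ^ s * \<phi> j a) * cnj (l ^ s * \<phi> j a))"
      using pw by (intro sum.cong) auto
    also have "\<dots> = (\<Sum>s<T. \<Sum>a\<in>I. cnj (\<phi> j a) * (f a * \<phi> j a))"
    proof (intro sum.cong refl)
      fix s a
      have ll: "l * cnj l = 1" using l1 complex_norm_square[of l] by simp
      have "l ^ s * cnj (l ^ s) = (l * cnj l) ^ s" by (simp add: power_mult_distrib)
      then have "l ^ s * cnj (l ^ s) = 1" using ll by simp
      then have "f a * (l ^ s * \<phi> j a) * cnj (l ^ s * \<phi> j a) = (l ^ s * cnj (l ^ s)) * (cnj (\<phi> j a) * (f a * \<phi> j a))"
        by (simp add: mult_ac)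
      also have "\<dots> = cnj (\<phi> j a) * (f a * \<phi> j a)" using \<open>l ^ s * cnj (l ^ s) = 1\<close> by simp
      finally show "f a * (l ^ s * \<phi> j a) * cnj (l ^ s * \<phi> j a) = cnj (\<phi> j a) * (f a * \<phi> j a)" .
    qed
    also have "\<dots> = of_nat T * cinner I (\<phi> j) (Op f (\<phi> j))"
      by (simp add: cinner_def Op_def)
    finally show ?thesis .
  qed
  have step2: "(real T)^2 * (cmod (cinner I (\<phi> j) (Op f (\<phi> j))))^2 \<le> (\<Sum>b\<in>I. (cmod (Gv (\<phi> j) b))^2)"
    if j: "j < n" for j
  proof -
    have nrm: "cinner I (\<phi> j) (\<phi> j) = 1" using on j by simp
    have "(real T)^2 * (cmod (cinner I (\<phi> j) (Op f (\<phi> j))))^2 = (cmod (cinner I (\<phi> j) (Gv (\<phi> j))))^2"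
      using step1[OF j] by (simp add: norm_mult power_mult_distrib)
    also have "\<dots> \<le> (\<Sum>b\<in>I. (cmod (Gv (\<phi> j) b))^2)" by (rule bessel1[OF fin nrm])
    finally show ?thesis .
  qed
  have step3: "(\<Sum>j<n. \<Sum>b\<in>I. (cmod (Gv (\<phi> j) b))^2) \<le> (\<Sum>b\<in>I. \<Sum>c\<in>I. (cmod (G b c))^2)"
  proof -
    have "(\<Sum>j<n. \<Sum>b\<in>I. (cmod (Gv (\<phi> j) b))^2) = (\<Sum>b\<in>I. \<Sum>j<n. (cmod (cinner I (\<phi> j) (\<lambda>c. cnj (G b c))))^2)"
    proof -
      have "cmod (Gv (\<phi> j) b) = cmod (cinner I (\<phi> j) (\<lambda>c. cnj (G b c)))" for j b
      proof -
        have "cinner I (\<phi> j) (\<lambda>c. cnj (G b c)) = cnj (Gv (\<phi> j) b)"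
          by (simp add: cinner_def Gv_def mult.commute)
        then show ?thesis by simp
      qed
      then show ?thesis by (simp add: sum.swap[of _ "{..<n}"])
    qed
    also have "\<dots> \<le> (\<Sum>b\<in>I. \<Sum>c\<in>I. (cmod (cnj (G b c)))^2)"
      by (rule sum_mono, rule bessel[OF fin on])
    finally show ?thesis by simp
  qed
  have step4: "(\<Sum>b\<in>I. \<Sum>c\<in>I. (cmod (G b c))^2) = (\<Sum>s<T. \<Sum>s'<T. \<Sum>a\<in>I. \<Sum>a'\<in>I. Re (f a * cnj (f a')) *
          (cmod (mm I (cpw I U s) (adj (cpw I U s')) a a'))^2)"
    unfolding G_def using HS_identity[OF fin, where T=T and P=P and f=f] by (simp add: mm_def adj_def P_def)
  have "(real T)^2 * (\<Sum>j<n. (cmod (cinner I (\<phi> j) (Op f (\<phi> j))))^2)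
      = (\<Sum>j<n. (real T)^2 * (cmod (cinner I (\<phi> j) (Op f (\<phi> j))))^2)" by (simp add: sum_distrib_left)
  also have "\<dots> \<le> (\<Sum>j<n. \<Sum>b\<in>I. (cmod (Gv (\<phi> j) b))^2)" by (rule sum_mono, rule step2) auto
  also have "\<dots> \<le> (\<Sum>b\<in>I. \<Sum>c\<in>I. (cmod (G b c))^2)" by (rule step3)
  finally have "(real T)^2 * (\<Sum>j<n. (cmod (cinner I (\<phi> j) (Op f (\<phi> j))))^2) \<le> (\<Sum>s<T. \<Sum>s'<T. \<Sum>a\<in>I. \<Sum>a'\<in>I. Re (f a * cnj (f a')) *
          (cmod (mm I (cpw I U s) (adj (cpw I U s')) a a'))^2)" using step4 by simp
  then show ?thesis using T by (simp add: field_simps)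
qed



definition mean :: "(real \<Rightarrow> real) \<Rightarrow> real \<Rightarrow> real" where
  "mean g K = (1 / K) * integral {0..K} g"

lemma inv_tendsto0: "((\<lambda>K::real. 1 / K) \<longlongrightarrow> 0) at_top"
  using tendsto_divide_0[OF tendsto_const filterlim_at_top_imp_at_infinity[OF filterlim_ident], of 1]
  by simp

lemma cont_cis_term: "continuous_on A (\<lambda>k. Re (z * cis (k * x)))"
  by (simp add: cis_conv_exp) (intro continuous_intros)

lemma integrable_cis_term: "(\<lambda>k. Re (z * cis (k * x))) integrable_on {a..b}"
  by (rule integrable_continuous_interval[OF cont_cis_term])

lemma Re_z_cis: "Re (z * cis t) = Re z * cos t - Im z * sin t"
  by (simp add: cis.sel)

lemma mean_cis:
  "((\<lambda>K. mean (\<lambda>k. Re (z * cis (k * x))) K) \<longlongrightarrow> (if x = 0 then Re z else 0)) at_top"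
proof (cases "x = 0")
  case True
  have ev: "eventually (\<lambda>K. mean (\<lambda>k. Re (z * cis (k * x))) K = Re z) at_top"
    using eventually_gt_at_top[of 0]
    by eventually_elim (simp add: mean_def True)
  have "((\<lambda>K. mean (\<lambda>k. Re (z * cis (k * x))) K) \<longlongrightarrow> Re z) at_top" by (rule tendsto_eventually[OF ev])
  then show ?thesis using True by simp
next
  case False
  define F where "F k = (Re z * sin (k * x) + Im z * cos (k * x)) / x" for k
  have der: "(F has_real_derivative Re (z * cis (k * x))) (at k)" for k
  proof -
    have "(F has_real_derivative (Re z * (cos (k * x) * x) + Im z * (- sin (k * x) * x)) / x) (at k)"
      unfolding F_def using False by (auto intro!: derivative_eq_intros)
    moreover have "(Re z * (cos (k * x) * x) + Im z * (- sin (k * x) * x)) / x = Re (z * cis (k * x))"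
      using False by (simp add: Re_z_cis field_simps)
    ultimately show ?thesis by simp
  qed
  have int: "integral {0..K} (\<lambda>k. Re (z * cis (k * x))) = F K - F 0" if "K \<ge> 0" for K
  proof (rule integral_unique, rule fundamental_theorem_of_calculus[OF that])
    fix k assume "k \<in> {0..K}"
    show "(F has_vector_derivative Re (z * cis (k * x))) (at k within {0..K})"
      using der[of k] has_real_derivative_iff_has_vector_derivative has_vector_derivative_at_within by blast
  qed
  define B where "B = 2 * (\<bar>Re z\<bar> + \<bar>Im z\<bar>) / \<bar>x\<bar>"
  have Fb: "\<bar>F K - F 0\<bar> \<le> B" for K
  proof -
    have "\<bar>Re z * sin (K * x) + Im z * cos (K * x)\<bar> \<le> \<bar>Re z\<bar> + \<bar>Im z\<bar>"
    proof -
      have "\<bar>Re z * sin (K * x)\<bar> \<le> \<bar>Re z\<bar>" by (simp add: abs_mult mult_left_le)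
      moreover have "\<bar>Im z * cos (K * x)\<bar> \<le> \<bar>Im z\<bar>" by (simp add: abs_mult mult_left_le)
      ultimately show ?thesis by linarith
    qed
    moreover have "\<bar>Im z\<bar> \<le> \<bar>Re z\<bar> + \<bar>Im z\<bar>" by simp
    ultimately have "\<bar>(Re z * sin (K * x) + Im z * cos (K * x)) - (Im z)\<bar> \<le> 2 * (\<bar>Re z\<bar> + \<bar>Im z\<bar>)"
      using abs_triangle_ineq4[of "Re z * sin (K * x) + Im z * cos (K * x)" "Im z"] by (smt (verit))
    then show ?thesis using False
      by (simp add: F_def B_def diff_divide_distrib[symmetric] abs_divide divide_right_mono)
  qed
  have "((\<lambda>K. mean (\<lambda>k. Re (z * cis (k * x))) K) \<longlongrightarrow> 0) at_top"
  proof (rule tendsto_0_le[OF inv_tendsto0, where K = B])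
    show "eventually (\<lambda>K. norm (mean (\<lambda>k. Re (z * cis (k * x))) K) \<le> norm (1 / K) * B) at_top"
      using eventually_gt_at_top[of 0]
    proof eventually_elim
      case (elim K)
      have "norm (mean (\<lambda>k. Re (z * cis (k * x))) K) = (1 / K) * \<bar>F K - F 0\<bar>"
        using elim int[of K] by (simp add: mean_def abs_mult)
      also have "\<dots> \<le> (1 / K) * B" using Fb[of K] elim by (simp add: divide_right_mono)
      finally show ?case using elim by simp
    qed
  qed
  then show ?thesis using False by simp
qed

lemma mean_sum:
  assumes fin: "finite S" and lim: "\<And>m. m \<in> S \<Longrightarrow> ((\<lambda>K. mean (g m) K) \<longlongrightarrow> L m) at_top"
    and int: "\<And>m K. m \<in> S \<Longrightarrow> g m integrable_on {0..K}"
  shows "((\<lambda>K. mean (\<lambda>k. \<Sum>m\<in>S. g m k) K) \<longlongrightarrow> (\<Sum>m\<in>S. L m)) at_top"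
proof -
  have "mean (\<lambda>k. \<Sum>m\<in>S. g m k) K = (\<Sum>m\<in>S. mean (g m) K)" for K
    using fin int by (simp add: mean_def integral_sum sum_distrib_left)
  then show ?thesis using tendsto_sum[OF lim] by simp
qed

lemma mean_cmult:
  assumes lim: "((\<lambda>K. mean g K) \<longlongrightarrow> L) at_top"
  shows "((\<lambda>K. mean (\<lambda>k. c * g k) K) \<longlongrightarrow> c * L) at_top"
proof -
  have "mean (\<lambda>k. c * g k) K = c * mean g K" for K
    by (simp add: mean_def)
  then show ?thesis using tendsto_mult[OF tendsto_const lim] by simp
qed

lemma mean_le:
  assumes ig: "\<And>K. K \<ge> 0 \<Longrightarrow> g integrable_on {0..K}" and ih: "\<And>K. h integrable_on {0..K}"
    and le: "\<And>k. k \<ge> 0 \<Longrightarrow> g k \<le> h k"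
    and lg: "((\<lambda>K. mean g K) \<longlongrightarrow> V) at_top" and lh: "((\<lambda>K. mean h K) \<longlongrightarrow> W) at_top"
  shows "V \<le> W"
proof (rule tendsto_le[OF _ lh lg])
  show "eventually (\<lambda>K. mean g K \<le> mean h K) at_top"
    using eventually_gt_at_top[of 0]
  proof eventually_elim
    case (elim K)
    have "integral {0..K} g \<le> integral {0..K} h"
      using ig[of K] ih[of K] le elim by (intro integral_le) auto
    then show ?case using elim by (simp add: mean_def divide_right_mono)
  qed
qed simp



definition Uk :: "('i \<Rightarrow> real) \<Rightarrow> ('i \<Rightarrow> 'i \<Rightarrow> complex) \<Rightarrow> real \<Rightarrow> 'i \<Rightarrow> 'i \<Rightarrow> complex" where
  "Uk L S k = (\<lambda>b c. cis (k * L b) * S b c)"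

definition wlen :: "('i \<Rightarrow> real) \<Rightarrow> 'i list \<Rightarrow> real" where
  "wlen L xs = (\<Sum>i<length xs - 1. L (xs ! i))"

lemma cis_cnj_self: "cis a * cnj (cis a) = 1"
  by (simp add: cis_cnj cis_mult)

lemma rows_Uk: "rows_on I S \<Longrightarrow> rows_on I (Uk L S k)"
  unfolding rows_on_def
proof (intro ballI)
  fix b b' assume R: "\<forall>b\<in>I. \<forall>b'\<in>I. (\<Sum>c\<in>I. S b c * cnj (S b' c)) = (if b = b' then 1 else 0)"
    and b: "b \<in> I" and b': "b' \<in> I"
  have "(\<Sum>c\<in>I. Uk L S k b c * cnj (Uk L S k b' c)) = cis (k * L b) * cnj (cis (k * L b')) * (\<Sum>c\<in>I. S b c * cnj (S b' c))"
    by (simp add: Uk_def sum_distrib_left mult_ac)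
  also have "\<dots> = (if b = b' then 1 else 0)" using R b b' by (simp add: cis_cnj_self)
  finally show "(\<Sum>c\<in>I. Uk L S k b c * cnj (Uk L S k b' c)) = (if b = b' then 1 else 0)" .
qed

lemma cols_Uk: "cols_on I S \<Longrightarrow> cols_on I (Uk L S k)"
  unfolding cols_on_def
proof (intro ballI)
  fix c c' assume C: "\<forall>c\<in>I. \<forall>c'\<in>I. (\<Sum>b\<in>I. cnj (S b c) * S b c') = (if c = c' then 1 else 0)"
    and c: "c \<in> I" and c': "c' \<in> I"
  have "(\<Sum>b\<in>I. cnj (Uk L S k b c) * Uk L S k b c') = (\<Sum>b\<in>I. (cis (k * L b) * cnj (cis (k * L b))) * (cnj (S b c) * S b c'))"
    by (simp add: Uk_def mult_ac)
  also have "\<dots> = (\<Sum>b\<in>I. cnj (S b c) * S b c')" by (simp add: cis_cnj_self)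
  also have "\<dots> = (if c = c' then 1 else 0)" using C c c' by simp
  finally show "(\<Sum>b\<in>I. cnj (Uk L S k b c) * Uk L S k b c') = (if c = c' then 1 else 0)" .
qed

lemma prod_cis: "(\<Prod>i\<in>A. cis (g i)) = cis (sum g A)"
proof (cases "finite A")
  case True
  then show ?thesis by (induction A rule: finite_induct) (auto simp: cis_mult)
qed simp

lemma amp_Uk: "amp (Uk L S k) xs = cis (k * wlen L xs) * amp S xs"
proof -
  have "amp (Uk L S k) xs = (\<Prod>i<length xs - 1. cis (k * L (xs ! i))) * amp S xs"
    by (simp add: amp_def Uk_def prod.distrib)
  also have "(\<Prod>i<length xs - 1. cis (k * L (xs ! i))) = cis (k * wlen L xs)"
    by (simp add: prod_cis wlen_def sum_distrib_left)
  finally show ?thesis .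
qed

lemma cmod_sum_sq:
  "(cmod (\<Sum>x\<in>A. z x))^2 = (\<Sum>x\<in>A. \<Sum>y\<in>A. Re (z x * cnj (z y)))"
proof -
  have "(cmod (\<Sum>x\<in>A. z x))^2 = Re ((\<Sum>x\<in>A. z x) * cnj (\<Sum>y\<in>A. z y))" by (rule cmod_sq_Re)
  also have "\<dots> = (\<Sum>x\<in>A. \<Sum>y\<in>A. Re (z x * cnj (z y)))"
    by (simp add: sum_product)
  finally show ?thesis .
qed

lemma Pk_sq:
  assumes fin: "finite I" and p: "p \<in> I"
  shows "(cmod (cpw I (Uk L S k) t p q))^2 =
    (\<Sum>x\<in>walks I t p q. \<Sum>y\<in>walks I t p q. Re (amp S x * cnj (amp S y) * cis (k * (wlen L x - wlen L y))))"
proof -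
  have "cpw I (Uk L S k) t p q = (\<Sum>x\<in>walks I t p q. cis (k * wlen L x) * amp S x)"
    by (simp add: cpw_walks[OF fin p] amp_Uk)
  then have "(cmod (cpw I (Uk L S k) t p q))^2 = (\<Sum>x\<in>walks I t p q. \<Sum>y\<in>walks I t p q.
        Re (cis (k * wlen L x) * amp S x * cnj (cis (k * wlen L y) * amp S y)))"
    by (simp add: cmod_sum_sq)
  also have "\<dots> = (\<Sum>x\<in>walks I t p q. \<Sum>y\<in>walks I t p q. Re (amp S x * cnj (amp S y) * cis (k * (wlen L x - wlen L y))))"
  proof (intro sum.cong refl)
    fix x y
    have "cis (k * wlen L x) * amp S x * cnj (cis (k * wlen L y) * amp S y)
        = amp S x * cnj (amp S y) * (cis (k * wlen L x) * cis (- (k * wlen L y)))"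
      by (simp add: cis_cnj mult_ac)
    also have "\<dots> = amp S x * cnj (amp S y) * cis (k * (wlen L x - wlen L y))"
      by (simp add: cis_mult right_diff_distrib)
    finally have eq: "cis (k * wlen L x) * amp S x * cnj (cis (k * wlen L y) * amp S y) = amp S x * cnj (amp S y) * cis (k * (wlen L x - wlen L y))" .
    show "Re (cis (k * wlen L x) * amp S x * cnj (cis (k * wlen L y) * amp S y)) =
        Re (amp S x * cnj (amp S y) * cis (k * (wlen L x - wlen L y)))" by (simp only: eq)
  qed
  finally show ?thesis .
qed

definition Qm :: "'i set \<Rightarrow> ('i \<Rightarrow> real) \<Rightarrow> ('i \<Rightarrow> 'i \<Rightarrow> complex) \<Rightarrow> nat \<Rightarrow> 'i \<Rightarrow> 'i \<Rightarrow> real" where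
  "Qm I L S t p q = (\<Sum>x\<in>walks I t p q. \<Sum>y\<in>walks I t p q.
      if wlen L x = wlen L y then Re (amp S x * cnj (amp S y)) else 0)"

lemma Pk_fun:
  assumes fin: "finite I" and p: "p \<in> I"
  shows "(\<lambda>k. (cmod (cpw I (Uk L S k) t p q))^2) =
    (\<lambda>k. \<Sum>x\<in>walks I t p q. \<Sum>y\<in>walks I t p q. Re (amp S x * cnj (amp S y) * cis (k * (wlen L x - wlen L y))))"
  using Pk_sq[OF fin p] by auto

lemma int_Pk:
  assumes fin: "finite I" and p: "p \<in> I"
  shows "(\<lambda>k. (cmod (cpw I (Uk L S k) t p q))^2) integrable_on {a..b}"
  unfolding Pk_fun[OF fin p]
  by (intro integrable_sum finite_walks fin integrable_cis_term)

lemma mean_Pk: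
  assumes fin: "finite I" and p: "p \<in> I"
  shows "((\<lambda>K. mean (\<lambda>k. (cmod (cpw I (Uk L S k) t p q))^2) K) \<longlongrightarrow> Qm I L S t p q) at_top"
  unfolding Pk_fun[OF fin p] Qm_def
proof (intro mean_sum finite_walks fin integrable_sum integrable_cis_term)
  fix x y
  show "((\<lambda>K. mean (\<lambda>k. Re (amp S x * cnj (amp S y) * cis (k * (wlen L x - wlen L y)))) K) \<longlongrightarrow>
      (if wlen L x = wlen L y then Re (amp S x * cnj (amp S y)) else 0)) at_top"
    using mean_cis[of "amp S x * cnj (amp S y)" "wlen L x - wlen L y"] by simp
qed



definition rv :: "nat \<times> nat \<Rightarrow> nat \<times> nat" where "rv a = (snd a, fst a)"

lemma count_ext:
  fixes r :: nat
  assumes fin: "finite I" and deg: "\<forall>a\<in>I. card {b\<in>I. R a b} \<le> r"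
  shows "a \<in> I \<Longrightarrow> card {ys. length ys = m \<and> set ys \<subseteq> I \<and> successively R (a # ys)} \<le> r ^ m"
proof (induction m arbitrary: a)
  case 0
  have "{ys. length ys = 0 \<and> set ys \<subseteq> I \<and> successively R (a # ys)} = {[]}" by auto
  then show ?case by simp
next
  case (Suc m)
  define N where "N = {b\<in>I. R a b}"
  define Ex where "Ex b = {ys. length ys = m \<and> set ys \<subseteq> I \<and> successively R (b # ys)}" for b
  have finEx: "finite (Ex b)" for b
    by (rule finite_subset[OF _ finite_lists_length_eq[OF fin, of m]]) (auto simp: Ex_def)
  have finN: "finite N" using fin by (simp add: N_def)
  have sub: "{ys. length ys = Suc m \<and> set ys \<subseteq> I \<and> successively R (a # ys)} \<subseteq> (\<lambda>(b, ys). b # ys) ` (Sigma N Ex)"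
  proof
    fix xs assume xs: "xs \<in> {ys. length ys = Suc m \<and> set ys \<subseteq> I \<and> successively R (a # ys)}"
    then obtain b ys where b: "xs = b # ys" by (cases xs) auto
    with xs have "b \<in> N" "ys \<in> Ex b" by (auto simp: N_def Ex_def)
    then show "xs \<in> (\<lambda>(b, ys). b # ys) ` (Sigma N Ex)" using b by force
  qed
  have "card {ys. length ys = Suc m \<and> set ys \<subseteq> I \<and> successively R (a # ys)} \<le> card ((\<lambda>(b, ys). b # ys) ` (Sigma N Ex))"
    by (rule card_mono[OF finite_imageI[OF finite_SigmaI[OF finN finEx]] sub])
  also have "\<dots> \<le> card (Sigma N Ex)" by (rule card_image_le[OF finite_SigmaI[OF finN finEx]])
  also have "\<dots> = (\<Sum>b\<in>N. card (Ex b))" by (rule card_SigmaI[OF finN]) (simp add: finEx)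
  also have "\<dots> \<le> (\<Sum>b\<in>N. r ^ m)" using Suc.IH by (intro sum_mono) (auto simp: Ex_def N_def)
  also have "\<dots> = card N * r ^ m" by simp
  also have "\<dots> \<le> r * r ^ m" using deg Suc.prems by (simp add: N_def)
  finally show ?case by simp
qed

lemma succ_drop:
  assumes "successively R xs" "0 < i" "i \<le> length xs"
  shows "successively R ((xs ! (i - 1)) # drop i xs)"
proof -
  have "drop (i - 1) xs = (xs ! (i - 1)) # drop i xs"
    using assms by (metis Cons_nth_drop_Suc One_nat_def Suc_pred diff_less le_less_trans less_one linorder_neqE_nat not_le)
  moreover have "successively R (drop (i - 1) xs)"
    using assms(1) by (metis append_take_drop_id successively_append_iff)
  ultimately show ?thesis by simp
qed

lemma rv_rv[simp]: "rv (rv a) = a" by (simp add: rv_def)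

lemma cycle_lemma:
  fixes xs ys :: "(nat \<times> nat) list"
  assumes sym: "\<forall>u v. E u v \<longrightarrow> E v u"
    and xsI: "set xs \<subseteq> dbonds E" and ysI: "set ys \<subseteq> dbonds E"
    and lx: "length xs = Suc t" and ly: "length ys = Suc t"
    and sx: "successively R xs" and sy: "successively R ys"
    and Rd: "\<forall>a b. R a b \<longrightarrow> snd a = fst b \<and> b \<noteq> rv a"
    and x0: "xs ! 0 = ys ! 0" and xt: "xs ! t = ys ! t" and ne: "xs \<noteq> ys" and tT: "t \<le> T"
  obtains i where "1 \<le> i" "i \<le> t" "take i xs = take i ys" "ubond (xs ! i) \<in> cycle_bonds E (2 * T)"
proof -
  define D where "D = {k. k \<le> t \<and> xs ! k \<noteq> ys ! k}"
  have finD: "finite D" by (simp add: D_def)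
  have neD: "D \<noteq> {}"
  proof
    assume "D = {}"
    then have "\<forall>k<length xs. xs ! k = ys ! k" using lx by (auto simp: D_def)
    then have "xs = ys" using lx ly by (intro nth_equalityI) auto
    with ne show False by simp
  qed
  define i where "i = Min D"
  define j where "j = Max D"
  have iD: "i \<in> D" using finD neD by (simp add: i_def)
  have jD: "j \<in> D" using finD neD by (simp add: j_def)
  have ij: "i \<le> j" using finD iD by (simp add: i_def j_def)
  have i1: "1 \<le> i" using iD x0 by (cases i) (auto simp: D_def)
  have jt: "j < t" using jD xt by (auto simp: D_def le_less)
  have below: "xs ! k = ys ! k" if "k < i" for k
  proof (rule ccontr)
    assume "xs ! k \<noteq> ys ! k"
    then have "k \<in> D" using that ij jt by (simp add: D_def)
    then have "i \<le> k" unfolding i_def by (rule Min_le[OF finD])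
    then show False using that by simp
  qed
  have above: "xs ! k = ys ! k" if "j < k" "k \<le> t" for k
  proof (rule ccontr)
    assume "xs ! k \<noteq> ys ! k"
    then have "k \<in> D" using that by (simp add: D_def)
    then have "k \<le> j" unfolding j_def by (rule Max_ge[OF finD])
    then show False using that by simp
  qed
  have xi: "xs ! i \<noteq> ys ! i" and xj: "xs ! j \<noteq> ys ! j" using iD jD by (auto simp: D_def)
  have Rx: "snd (xs ! k) = fst (xs ! Suc k) \<and> xs ! Suc k \<noteq> rv (xs ! k)" if "k < t" for k
    using spec[OF spec[OF Rd, of "xs ! k"], of "xs ! Suc k"] successively_nth[OF sx, of k] that lx by simp
  have Ry: "snd (ys ! k) = fst (ys ! Suc k) \<and> ys ! Suc k \<noteq> rv (ys ! k)" if "k < t" for k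
    using spec[OF spec[OF Rd, of "ys ! k"], of "ys ! Suc k"] successively_nth[OF sy, of k] that ly by simp
  have xin: "xs ! k \<in> dbonds E" if "k \<le> t" for k using xsI lx that by (auto intro: nth_mem)
  have yin: "ys ! k \<in> dbonds E" if "k \<le> t" for k using ysI ly that by (auto intro: nth_mem)
  have rvin: "rv a \<in> dbonds E" if "a \<in> dbonds E" for a using sym that by (auto simp: dbonds_def rv_def)
  define m where "m = j - i + 1"
  have m1: "1 \<le> m" by (simp add: m_def)
  define ps where "ps = map (\<lambda>n. if n < m then xs ! (i + n) else rv (ys ! (j + m - n))) [0..<2 * m]"
  have lps: "length ps = 2 * m" by (simp add: ps_def)
  have psn: "ps ! n = (if n < m then xs ! (i + n) else rv (ys ! (j + m - n)))" if "n < 2 * m" for n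
    using that by (simp add: ps_def)
  have cyc: "is_cycle E ps"
    unfolding is_cycle_def
  proof (intro conjI)
    show "ps \<noteq> []" using lps m1 by auto
    show "set ps \<subseteq> dbonds E"
    proof
      fix e assume "e \<in> set ps"
      then obtain n where n: "n < 2 * m" "e = ps ! n" using lps by (auto simp: in_set_conv_nth)
      show "e \<in> dbonds E"
      proof (cases "n < m")
        case True then show ?thesis using n psn[OF n(1)] xin[of "i + n"] jt ij by (simp add: m_def)
      next
        case False then show ?thesis using n psn[OF n(1)] yin[of "j + m - n"] rvin jt by simp
      qed
    qed
    show "\<forall>n<length ps. snd (ps ! n) = fst (ps ! ((n + 1) mod length ps)) \<and> ps ! ((n + 1) mod length ps) \<noteq> (snd (ps ! n), fst (ps ! n))"
    proof (intro allI impI)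
    fix n assume n: "n < length ps"
    then have n2: "n < 2 * m" using lps by simp
    show "snd (ps ! n) = fst (ps ! ((n + 1) mod length ps)) \<and> ps ! ((n + 1) mod length ps) \<noteq> (snd (ps ! n), fst (ps ! n))"
    proof (cases "n + 1 < m")
      case True
      have md: "(n + 1) mod length ps = n + 1" using True lps by simp
      have "i + n < t" using True jt by (simp add: m_def)
      then show ?thesis using md psn[of n] psn[of "n + 1"] True n2 Rx[of "i + n"]
        by (simp add: rv_def) (metis prod.collapse)
    next
      case F1: False
      show ?thesis
      proof (cases "n + 1 = m")
        case True
        have md: "(n + 1) mod length ps = m" using True lps m1 by simp
        have jn: "i + n = j" using True ij by (simp add: m_def)
        have "snd (xs ! j) = fst (ys ! Suc j)" using Rx[OF jt] above[of "Suc j"] jt by simp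
        moreover have "snd (ys ! j) = fst (ys ! Suc j)" using Ry[OF jt] by simp
        ultimately show ?thesis using md psn[of n] psn[of m] True n2 m1 jn xj
          by (auto simp: rv_def prod_eq_iff)
      next
        case F2: False
        show ?thesis
        proof (cases "n + 1 < 2 * m")
          case True
          have md: "(n + 1) mod length ps = n + 1" using True lps by simp
          define k where "k = j + m - n - 1"
          have kk: "j + m - n = Suc k" "j + m - (n + 1) = k" "i \<le> k" "k < t"
            using F1 F2 True jt ij by (auto simp: k_def m_def)
          show ?thesis using md psn[of n] psn[of "n + 1"] True n2 F1 F2 kk Ry[of k]
            by (auto simp: rv_def prod_eq_iff)
        next
          case False
          have nn: "n + 1 = 2 * m" using False n2 by simp
          have md: "(n + 1) mod length ps = 0" using nn lps by simp
          have jm: "j + m - n = i" using nn ij by (simp add: m_def)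
          have "snd (ys ! (i - 1)) = fst (ys ! i)" using Ry[of "i - 1"] i1 ij jt by simp
          moreover have "snd (xs ! (i - 1)) = fst (xs ! i)" using Rx[of "i - 1"] i1 ij jt by simp
          moreover have "xs ! (i - 1) = ys ! (i - 1)" using below[of "i - 1"] i1 by simp
          ultimately show ?thesis using md psn[of n] psn[of 0] nn m1 jm xi F1 F2
            by (auto simp: rv_def prod_eq_iff)
        qed
      qed
    qed
    qed
  qed
  have "length ps \<le> 2 * T" using lps jt tT by (simp add: m_def)
  moreover have "ubond (xs ! i) \<in> ubond ` set ps"
  proof -
    have "ps ! 0 = xs ! i" using psn[of 0] m1 by simp
    moreover have "ps ! 0 \<in> set ps" using lps m1 by simp
    ultimately show ?thesis by (metis image_eqI)
  qed
  ultimately have "ubond (xs ! i) \<in> cycle_bonds E (2 * T)"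
    using cyc by (auto simp: cycle_bonds_def)
  moreover have "take i xs = take i ys"
    using below lx ly ij jt by (intro nth_equalityI) auto
  moreover have "i \<le> t" using ij jt by simp
  ultimately show ?thesis using that i1 by blast
qed



lemma fin_dbonds: "simple_graph Vs E \<Longrightarrow> finite (dbonds E)"
  by (rule finite_subset[of _ "Vs \<times> Vs"]) (auto simp: simple_graph_def dbonds_def)

lemma fin_nbr: "simple_graph Vs E \<Longrightarrow> finite {w. E v w}"
  by (rule finite_subset[of _ Vs]) (auto simp: simple_graph_def)

lemma reindex_out:
  assumes sg: "simple_graph Vs E"
  shows "(\<Sum>c\<in>dbonds E. if fst c = v then F (snd c) else 0) = (\<Sum>w\<in>{w. E v w}. F w)"
proof -
  have "(\<Sum>c\<in>dbonds E. if fst c = v then F (snd c) else 0) = (\<Sum>c\<in>{c\<in>dbonds E. fst c = v}. F (snd c))"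
    using fin_dbonds[OF sg] by (simp add: sum.inter_filter)
  also have "{c\<in>dbonds E. fst c = v} = Pair v ` {w. E v w}" by (auto simp: dbonds_def)
  also have "(\<Sum>c\<in>Pair v ` {w. E v w}. F (snd c)) = (\<Sum>w\<in>{w. E v w}. F w)"
    by (subst sum.reindex) (auto simp: inj_on_def)
  finally show ?thesis .
qed

lemma reindex_in:
  assumes sg: "simple_graph Vs E"
  shows "(\<Sum>b\<in>dbonds E. if snd b = v then F (fst b) else 0) = (\<Sum>u\<in>{u. E v u}. F u)"
proof -
  have sym: "E u v \<longleftrightarrow> E v u" for u using sg by (auto simp: simple_graph_def)
  have "(\<Sum>b\<in>dbonds E. if snd b = v then F (fst b) else 0) = (\<Sum>b\<in>{b\<in>dbonds E. snd b = v}. F (fst b))"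
    using fin_dbonds[OF sg] by (simp add: sum.inter_filter)
  also have "{b\<in>dbonds E. snd b = v} = (\<lambda>u. (u, v)) ` {u. E v u}" using sym by (auto simp: dbonds_def)
  also have "(\<Sum>b\<in>(\<lambda>u. (u, v)) ` {u. E v u}. F (fst b)) = (\<Sum>u\<in>{u. E v u}. F u)"
    by (subst sum.reindex) (auto simp: inj_on_def)
  finally show ?thesis .
qed

lemma S_rows:
  assumes sg: "simple_graph Vs E" and vm: "vertex_matrices_ok Vs E \<sigma>"
  shows "rows_on (dbonds E) (Smat \<sigma>)"
  unfolding rows_on_def
proof (intro ballI)
  fix b b' assume b: "b \<in> dbonds E" and b': "b' \<in> dbonds E"
  have sym: "E u v \<Longrightarrow> E v u" for u v using sg by (auto simp: simple_graph_def)
  have inV: "E u v \<Longrightarrow> v \<in> Vs" for u v using sg by (auto simp: simple_graph_def)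
  show "(\<Sum>c\<in>dbonds E. Smat \<sigma> b c * cnj (Smat \<sigma> b' c)) = (if b = b' then 1 else 0)"
  proof (cases "snd b = snd b'")
    case False
    have "(\<Sum>c\<in>dbonds E. Smat \<sigma> b c * cnj (Smat \<sigma> b' c)) = 0"
      using False by (intro sum.neutral) (auto simp: Smat_def)
    then show ?thesis using False by auto
  next
    case True
    define v where "v = snd b"
    have bu: "E v (fst b)" "E v (fst b')" using b b' True by (auto simp: dbonds_def v_def intro: sym)
    have vV: "v \<in> Vs" using b by (auto simp: dbonds_def v_def intro: inV)
    have U: "unitary_on {w. E v w} (\<sigma> v)" using vm vV by (simp add: vertex_matrices_ok_def)
    have "(\<Sum>c\<in>dbonds E. Smat \<sigma> b c * cnj (Smat \<sigma> b' c))
        = (\<Sum>c\<in>dbonds E. if fst c = v then \<sigma> v (snd c) (fst b) * cnj (\<sigma> v (snd c) (fst b')) else 0)"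
      using True by (intro sum.cong) (auto simp: Smat_def v_def)
    also have "\<dots> = (\<Sum>w\<in>{w. E v w}. \<sigma> v w (fst b) * cnj (\<sigma> v w (fst b')))"
      by (rule reindex_out[OF sg])
    also have "\<dots> = cnj (\<Sum>w\<in>{w. E v w}. cnj (\<sigma> v w (fst b)) * \<sigma> v w (fst b'))"
      by (simp add: mult.commute)
    also have "\<dots> = cnj (if fst b = fst b' then 1 else 0)"
      using U bu by (simp add: unitary_on_def)
    also have "\<dots> = (if b = b' then 1 else 0)" using True by (auto simp: prod_eq_iff)
    finally show ?thesis .
  qed
qed

lemma S_cols:
  assumes sg: "simple_graph Vs E" and vm: "vertex_matrices_ok Vs E \<sigma>"
  shows "cols_on (dbonds E) (Smat \<sigma>)"
  unfolding cols_on_def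
proof (intro ballI)
  fix c c' assume c: "c \<in> dbonds E" and c': "c' \<in> dbonds E"
  have inV: "E u v \<Longrightarrow> u \<in> Vs" for u v using sg by (auto simp: simple_graph_def)
  show "(\<Sum>b\<in>dbonds E. cnj (Smat \<sigma> b c) * Smat \<sigma> b c') = (if c = c' then 1 else 0)"
  proof (cases "fst c = fst c'")
    case False
    have "(\<Sum>b\<in>dbonds E. cnj (Smat \<sigma> b c) * Smat \<sigma> b c') = 0"
      using False by (intro sum.neutral) (auto simp: Smat_def)
    then show ?thesis using False by auto
  next
    case True
    define v where "v = fst c"
    have cw: "E v (snd c)" "E v (snd c')" using c c' True by (auto simp: dbonds_def v_def)
    have vV: "v \<in> Vs" using c by (auto simp: dbonds_def v_def intro: inV)
    have U: "unitary_on {w. E v w} (\<sigma> v)" using vm vV by (simp add: vertex_matrices_ok_def)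
    have "(\<Sum>b\<in>dbonds E. cnj (Smat \<sigma> b c) * Smat \<sigma> b c')
        = (\<Sum>b\<in>dbonds E. if snd b = v then cnj (\<sigma> v (snd c) (fst b)) * \<sigma> v (snd c') (fst b) else 0)"
      using True by (intro sum.cong) (auto simp: Smat_def v_def)
    also have "\<dots> = (\<Sum>u\<in>{u. E v u}. cnj (\<sigma> v (snd c) u) * \<sigma> v (snd c') u)"
      by (rule reindex_in[OF sg])
    also have "\<dots> = cnj (\<Sum>u\<in>{u. E v u}. \<sigma> v (snd c) u * cnj (\<sigma> v (snd c') u))"
      by (simp add: mult.commute)
    also have "\<dots> = cnj (if snd c = snd c' then 1 else 0)"
      using U cw by (simp add: unitary_on_def)
    also have "\<dots> = (if c = c' then 1 else 0)" using True by (auto simp: prod_eq_iff)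
    finally show ?thesis .
  qed
qed



lemma Smat_rv:
  assumes sg: "simple_graph Vs E" and nb: "no_backscattering Vs E \<sigma>" and a: "a \<in> dbonds E"
  shows "Smat \<sigma> a (rv a) = 0"
proof -
  have "E (snd a) (fst a)" "snd a \<in> Vs" using a sg by (auto simp: dbonds_def simple_graph_def)
  then show ?thesis using nb by (simp add: Smat_def rv_def no_backscattering_def)
qed

lemma deg_bound:
  assumes rg: "regular_graph Vs E d" and nb: "no_backscattering Vs E \<sigma>" and a: "a \<in> dbonds E"
  shows "card {b\<in>dbonds E. a \<in> dbonds E \<and> b \<in> dbonds E \<and> Smat \<sigma> a b \<noteq> 0} \<le> d - 1"
proof -
  have sg: "simple_graph Vs E" using rg by (simp add: regular_graph_def)
  have vV: "snd a \<in> Vs" and ea: "E (snd a) (fst a)" using a sg by (auto simp: dbonds_def simple_graph_def)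
  have cd: "card {w. E (snd a) w} = d" using rg vV by (simp add: regular_graph_def)
  have sub: "{b\<in>dbonds E. a \<in> dbonds E \<and> b \<in> dbonds E \<and> Smat \<sigma> a b \<noteq> 0} \<subseteq> Pair (snd a) ` ({w. E (snd a) w} - {fst a})"
  proof
    fix b assume b: "b \<in> {b\<in>dbonds E. a \<in> dbonds E \<and> b \<in> dbonds E \<and> Smat \<sigma> a b \<noteq> 0}"
    then have f: "fst b = snd a" by (auto simp: Smat_def split: if_splits)
    have "b \<noteq> rv a" using b Smat_rv[OF sg nb a] by auto
    then have "snd b \<noteq> fst a" using f by (auto simp: rv_def prod_eq_iff)
    moreover have "E (snd a) (snd b)" using b f by (auto simp: dbonds_def)
    ultimately show "b \<in> Pair (snd a) ` ({w. E (snd a) w} - {fst a})" using f by (metis DiffI image_eqI mem_Collect_eq prod.collapse singletonD)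
  qed
  have fin: "finite ({w. E (snd a) w} - {fst a})" using fin_nbr[OF sg] by simp
  have "card {b\<in>dbonds E. a \<in> dbonds E \<and> b \<in> dbonds E \<and> Smat \<sigma> a b \<noteq> 0} \<le> card (Pair (snd a) ` ({w. E (snd a) w} - {fst a}))"
    by (rule card_mono[OF finite_imageI[OF fin] sub])
  also have "\<dots> \<le> card ({w. E (snd a) w} - {fst a})" by (rule card_image_le[OF fin])
  also have "\<dots> = d - 1" using cd ea fin_nbr[OF sg] by (simp add: card_Diff_singleton)
  finally show ?thesis .
qed

lemma amp_nz_succ:
  assumes nz: "amp S xs \<noteq> 0" and sI: "set xs \<subseteq> I"
  shows "successively (\<lambda>a b. a \<in> I \<and> b \<in> I \<and> S a b \<noteq> 0) xs"
  unfolding successively_conv_nth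
proof (intro allI impI)
  fix i assume i: "Suc i < length xs"
  have "S (xs ! i) (xs ! Suc i) \<noteq> 0"
  proof
    assume "S (xs ! i) (xs ! Suc i) = 0"
    then have "amp S xs = 0" unfolding amp_def using i by (intro prod_zero) auto
    with nz show False by simp
  qed
  then show "xs ! i \<in> I \<and> xs ! Suc i \<in> I \<and> S (xs ! i) (xs ! Suc i) \<noteq> 0" using i sI by auto
qed

lemma amp_M: "amp (\<lambda>b c. (cmod (S b c))^2) xs = (cmod (amp S xs))^2"
  by (simp add: amp_def prod_norm[symmetric] prod_power_distrib[symmetric])

lemma M_rows:
  assumes R: "rows_on I S" and b: "b \<in> I"
  shows "(\<Sum>c\<in>I. (cmod (S b c))^2) = 1"
proof -
  have "(\<Sum>c\<in>I. S b c * cnj (S b c)) = 1" using R b by (simp add: rows_on_def)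
  then have "complex_of_real (\<Sum>c\<in>I. (cmod (S b c))^2) = 1"
    by (simp add: complex_norm_square del: of_real_power)
  then show ?thesis by (metis of_real_eq_1_iff)
qed

lemma M_cols:
  assumes C: "cols_on I S" and c: "c \<in> I"
  shows "(\<Sum>b\<in>I. (cmod (S b c))^2) = 1"
proof -
  have "(\<Sum>b\<in>I. cnj (S b c) * S b c) = 1" using C c by (simp add: cols_on_def)
  then have "complex_of_real (\<Sum>b\<in>I. (cmod (S b c))^2) = 1"
    by (simp add: cnj_mult_self del: of_real_power)
  then show ?thesis by (metis of_real_eq_1_iff)
qed

lemma cpw_rowsum:
  fixes M :: "'i \<Rightarrow> 'i \<Rightarrow> real"
  assumes fin: "finite I" and rs: "\<And>b. b \<in> I \<Longrightarrow> (\<Sum>c\<in>I. M b c) = 1"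
  shows "b \<in> I \<Longrightarrow> (\<Sum>c\<in>I. cpw I M j b c) = 1"
proof (induction j arbitrary: b)
  case 0
  then show ?case using fin by simp
next
  case (Suc j)
  have "(\<Sum>c\<in>I. cpw I M (Suc j) b c) = (\<Sum>e\<in>I. M b e * (\<Sum>c\<in>I. cpw I M j e c))"
    by (simp add: sum_distrib_left) (rule sum.swap)
  also have "\<dots> = (\<Sum>e\<in>I. M b e)" using Suc.IH by simp
  finally show ?case using rs Suc.prems by simp
qed

lemma cpw_colsum:
  fixes M :: "'i \<Rightarrow> 'i \<Rightarrow> real"
  assumes fin: "finite I" and cs: "\<And>c. c \<in> I \<Longrightarrow> (\<Sum>b\<in>I. M b c) = 1"
  shows "c \<in> I \<Longrightarrow> (\<Sum>b\<in>I. cpw I M i b c) = 1"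
proof (induction i arbitrary: c)
  case 0
  then show ?case using fin by (simp add: sum.delta)
next
  case (Suc i)
  have "(\<Sum>b\<in>I. cpw I M (Suc i) b c) = (\<Sum>e\<in>I. (\<Sum>b\<in>I. M b e) * cpw I M i e c)"
    by (simp add: sum_distrib_right) (rule sum.swap)
  also have "\<dots> = (\<Sum>e\<in>I. cpw I M i e c)" using cs by simp
  finally show ?case using Suc by simp
qed



lemma card_partners:
  assumes rg: "regular_graph Vs E d" and nb: "no_backscattering Vs E \<sigma>" and tT: "t \<le> T"
    and x: "x \<in> walks (dbonds E) t p q" and nz: "amp (Smat \<sigma>) x \<noteq> 0"
  shows "real (card {y\<in>walks (dbonds E) t p q. y \<noteq> x \<and> amp (Smat \<sigma>) y \<noteq> 0})
     \<le> (\<Sum>i\<in>{1..t}. if x ! i \<in> {e\<in>dbonds E. ubond e \<in> cycle_bonds E (2 * T)} then real (d - 1) ^ (t + 1 - i) else 0)"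
proof -
  define I where "I = dbonds E"
  define S where "S = Smat \<sigma>"
  define C where "C = {e\<in>I. ubond e \<in> cycle_bonds E (2 * T)}"
  define R where "R = (\<lambda>a b. a \<in> I \<and> b \<in> I \<and> S a b \<noteq> 0)"
  have sg: "simple_graph Vs E" using rg by (simp add: regular_graph_def)
  have fin: "finite I" using fin_dbonds[OF sg] by (simp add: I_def)
  have sym: "\<forall>u v. E u v \<longrightarrow> E v u" using sg by (simp add: simple_graph_def)
  have Rd: "\<forall>a b. R a b \<longrightarrow> snd a = fst b \<and> b \<noteq> rv a"
  proof (intro allI impI conjI)
    fix a b assume r: "R a b"
    then show "snd a = fst b" by (auto simp: R_def S_def Smat_def split: if_splits)
    show "b \<noteq> rv a" using r Smat_rv[OF sg nb, of a] by (auto simp: R_def S_def I_def)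
  qed
  have deg: "\<forall>a\<in>I. card {b\<in>I. R a b} \<le> d - 1"
    using deg_bound[OF rg nb] by (simp add: R_def I_def S_def)
  define Ext where "Ext i = (\<lambda>ys. take i x @ ys) ` {ys. length ys = t + 1 - i \<and> set ys \<subseteq> I \<and> successively R (x ! (i - 1) # ys)}" for i
  define Iset where "Iset = {i\<in>{1..t}. x ! i \<in> C}"
  have xI: "set x \<subseteq> I" and lx: "length x = Suc t" and x0: "x ! 0 = p" and xt: "x ! t = q"
    using x by (auto simp: walks_def I_def)
  have sx: "successively R x" unfolding R_def using amp_nz_succ[OF nz] xI by (simp add: S_def)
  have sub: "{y\<in>walks I t p q. y \<noteq> x \<and> amp S y \<noteq> 0} \<subseteq> (\<Union>i\<in>Iset. Ext i)"
  proof
    fix y assume y: "y \<in> {y\<in>walks I t p q. y \<noteq> x \<and> amp S y \<noteq> 0}"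
    have yI: "set y \<subseteq> I" and ly: "length y = Suc t" and y0: "y ! 0 = p" and yt: "y ! t = q"
      using y by (auto simp: walks_def)
    have sy: "successively R y" unfolding R_def using amp_nz_succ[of S y I] y yI by simp
    have xE: "set x \<subseteq> dbonds E" and yE: "set y \<subseteq> dbonds E" using xI yI by (auto simp: I_def)
    have e0: "x ! 0 = y ! 0" and et: "x ! t = y ! t" using x0 y0 xt yt by auto
    have ne: "x \<noteq> y" using y by auto
    obtain i where i: "1 \<le> i" "i \<le> t" "take i x = take i y" "ubond (x ! i) \<in> cycle_bonds E (2 * T)"
      using cycle_lemma[OF sym xE yE lx ly sx sy Rd e0 et ne tT] by blast
    have "x ! i \<in> I" using xI lx i by auto
    then have iI: "i \<in> Iset" using i by (simp add: Iset_def C_def)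
    have eq: "y = take i x @ drop i y" using i(3) by (metis append_take_drop_id)
    have "take i y ! (i - 1) = y ! (i - 1)" "take i x ! (i - 1) = x ! (i - 1)" using i(1) by auto
    then have "y ! (i - 1) = x ! (i - 1)" using i(3) by simp
    then have "successively R (x ! (i - 1) # drop i y)"
      using succ_drop[OF sy, of i] i ly by simp
    moreover have "length (drop i y) = t + 1 - i" using ly by simp
    moreover have "set (drop i y) \<subseteq> I" using yI by (meson order_trans set_drop_subset)
    ultimately have "y \<in> Ext i" unfolding Ext_def using eq by blast
    then show "y \<in> (\<Union>i\<in>Iset. Ext i)" using iI by blast
  qed
  have finIset: "finite Iset" by (simp add: Iset_def)
  have cardExt: "card (Ext i) \<le> (d - 1) ^ (t + 1 - i)" if "i \<in> Iset" for i
  proof -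
    have "x ! (i - 1) \<in> I" using that xI lx by (auto simp: Iset_def)
    then have "card {ys. length ys = t + 1 - i \<and> set ys \<subseteq> I \<and> successively R (x ! (i - 1) # ys)} \<le> (d - 1) ^ (t + 1 - i)"
      by (rule count_ext[OF fin deg])
    moreover have "finite {ys. length ys = t + 1 - i \<and> set ys \<subseteq> I \<and> successively R (x ! (i - 1) # ys)}"
      by (rule finite_subset[OF _ finite_lists_length_eq[OF fin, of "t + 1 - i"]]) auto
    ultimately show ?thesis unfolding Ext_def using card_image_le order_trans by blast
  qed
  have finW: "finite (walks I t p q)" by (rule finite_walks[OF fin])
  have "card {y\<in>walks I t p q. y \<noteq> x \<and> amp S y \<noteq> 0} \<le> card (\<Union>i\<in>Iset. Ext i)"
  proof (rule card_mono[OF _ sub])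
    show "finite (\<Union>i\<in>Iset. Ext i)"
    proof (rule finite_UN_I[OF finIset])
      fix i
      show "finite (Ext i)" unfolding Ext_def
        by (rule finite_imageI, rule finite_subset[OF _ finite_lists_length_eq[OF fin, of "t + 1 - i"]]) auto
    qed
  qed
  also have "\<dots> \<le> (\<Sum>i\<in>Iset. card (Ext i))" by (rule card_UN_le[OF finIset])
  also have "\<dots> \<le> (\<Sum>i\<in>Iset. (d - 1) ^ (t + 1 - i))" by (rule sum_mono[OF cardExt])
  finally have "real (card {y\<in>walks I t p q. y \<noteq> x \<and> amp S y \<noteq> 0}) \<le> real (\<Sum>i\<in>Iset. (d - 1) ^ (t + 1 - i))"
    by (simp only: of_nat_le_iff)
  also have "\<dots> = (\<Sum>i\<in>Iset. real (d - 1) ^ (t + 1 - i))" by simp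
  also have "\<dots> = (\<Sum>i\<in>{1..t}. if x ! i \<in> C then real (d - 1) ^ (t + 1 - i) else 0)"
    unfolding Iset_def by (rule sum.inter_filter) simp
  finally show ?thesis by (simp add: I_def S_def C_def)
qed



lemma amgm_nz:
  fixes A B :: complex
  shows "cmod A * cmod B \<le> (if B \<noteq> 0 then (cmod A)^2 / 2 else 0) + (if A \<noteq> 0 then (cmod B)^2 / 2 else 0)"
proof (cases "A = 0 \<or> B = 0")
  case True then show ?thesis by auto
next
  case False
  have "0 \<le> (cmod A - cmod B)^2" by simp
  then have "cmod A * cmod B \<le> (cmod A)^2 / 2 + (cmod B)^2 / 2" by (simp add: power2_diff field_simps)
  then show ?thesis using False by simp
qed

lemma sum_if_const: "finite A \<Longrightarrow> (\<Sum>y\<in>A. if P y then c else 0) = c * real (card {y\<in>A. P y})"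
  by (simp add: sum.inter_filter[symmetric])

lemma weight_C:
  fixes S :: "'i \<Rightarrow> 'i \<Rightarrow> complex"
  assumes fin: "finite I" and R: "rows_on I S" and Co: "cols_on I S" and CI: "C \<subseteq> I" and it: "i \<le> t"
  shows "(\<Sum>p\<in>I. \<Sum>q\<in>I. \<Sum>x\<in>walks I t p q. if x ! i \<in> C then (cmod (amp S x))^2 else 0) = real (card C)"
proof -
  define M where "M = (\<lambda>b c. (cmod (S b c))^2)"
  have finC: "finite C" using fin CI finite_subset by blast
  have "(\<Sum>p\<in>I. \<Sum>q\<in>I. \<Sum>x\<in>walks I t p q. if x ! i \<in> C then (cmod (amp S x))^2 else 0)
     = (\<Sum>p\<in>I. \<Sum>q\<in>I. \<Sum>x\<in>walks I t p q. \<Sum>e\<in>C. if x ! i = e then amp M x else 0)"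
    using finC by (intro sum.cong refl) (simp add: M_def amp_M)
  also have "\<dots> = (\<Sum>p\<in>I. \<Sum>q\<in>I. \<Sum>e\<in>C. \<Sum>x\<in>walks I t p q. if x ! i = e then amp M x else 0)"
    by (rule sum.cong[OF refl], rule sum.cong[OF refl], rule sum.swap)
  also have "\<dots> = (\<Sum>p\<in>I. \<Sum>q\<in>I. \<Sum>e\<in>C. cpw I M i p e * cpw I M (t - i) e q)"
    by (intro sum.cong refl) (auto intro!: walks_filter[OF fin _ it])
  also have "\<dots> = (\<Sum>p\<in>I. \<Sum>e\<in>C. \<Sum>q\<in>I. cpw I M i p e * cpw I M (t - i) e q)"
    by (rule sum.cong[OF refl], rule sum.swap)
  also have "\<dots> = (\<Sum>e\<in>C. \<Sum>p\<in>I. \<Sum>q\<in>I. cpw I M i p e * cpw I M (t - i) e q)"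
    by (rule sum.swap)
  also have "\<dots> = (\<Sum>e\<in>C. (\<Sum>p\<in>I. cpw I M i p e) * (\<Sum>q\<in>I. cpw I M (t - i) e q))"
    by (simp add: sum_product)
  also have "\<dots> = (\<Sum>e\<in>C. 1)"
  proof (intro sum.cong refl)
    fix e assume "e \<in> C"
    then have e: "e \<in> I" using CI by auto
    have rs: "\<And>b. b \<in> I \<Longrightarrow> (\<Sum>c\<in>I. M b c) = 1" using M_rows[OF R] by (simp add: M_def)
    have cs: "\<And>c. c \<in> I \<Longrightarrow> (\<Sum>b\<in>I. M b c) = 1" using M_cols[OF Co] by (simp add: M_def)
    show "(\<Sum>p\<in>I. cpw I M i p e) * (\<Sum>q\<in>I. cpw I M (t - i) e q) = 1"
      using cpw_rowsum[OF fin rs e] cpw_colsum[OF fin cs e] by simp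
  qed
  finally show ?thesis by simp
qed

lemma geom_bound0:
  fixes r :: real
  assumes r: "r \<ge> 2"
  shows "(\<Sum>i\<in>{1..t}. r ^ (t + 1 - i)) \<le> 2 * r ^ t - 2"
proof (induction t)
  case 0 then show ?case by simp
next
  case (Suc t)
  have "(\<Sum>i\<in>{1..Suc t}. r ^ (Suc t + 1 - i)) = r * (\<Sum>i\<in>{1..t}. r ^ (t + 1 - i)) + r"
  proof -
    have "(\<Sum>i\<in>{1..Suc t}. r ^ (Suc t + 1 - i)) = (\<Sum>i\<in>{1..t}. r ^ (Suc t + 1 - i)) + r"
      by simp
    moreover have "(\<Sum>i\<in>{1..t}. r ^ (Suc t + 1 - i)) = r * (\<Sum>i\<in>{1..t}. r ^ (t + 1 - i))"
      by (simp add: sum_distrib_left Suc_diff_le)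
    ultimately show ?thesis by simp
  qed
  also have "\<dots> \<le> r * (2 * r ^ t - 2) + r" using Suc.IH r by simp
  also have "\<dots> \<le> 2 * r ^ Suc t - 2" using r by (simp add: algebra_simps)
  finally show ?case .
qed

lemma geom_bound:
  fixes r :: real
  assumes r: "r \<ge> 2"
  shows "(\<Sum>i\<in>{1..t}. r ^ (t + 1 - i)) \<le> 2 * r ^ t"
  using geom_bound0[OF r, of t] by simp



lemma Dd_bound:
  assumes rg: "regular_graph Vs E d" and vm: "vertex_matrices_ok Vs E \<sigma>" and nb: "no_backscattering Vs E \<sigma>"
    and tT: "t \<le> T"
  shows "(\<Sum>p\<in>dbonds E. \<Sum>q\<in>dbonds E. \<Sum>x\<in>walks (dbonds E) t p q. \<Sum>y\<in>walks (dbonds E) t p q.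
            if x \<noteq> y then cmod (amp (Smat \<sigma>) x) * cmod (amp (Smat \<sigma>) y) else 0)
       \<le> real (card {e\<in>dbonds E. ubond e \<in> cycle_bonds E (2 * T)}) * (\<Sum>i\<in>{1..t}. real (d - 1) ^ (t + 1 - i))"
proof -
  define I where "I = dbonds E"
  define S where "S = Smat \<sigma>"
  define C where "C = {e\<in>I. ubond e \<in> cycle_bonds E (2 * T)}"
  define a where "a x = cmod (amp S x)" for x
  define g where "g x = (\<Sum>i\<in>{1..t}. if x ! i \<in> C then real (d - 1) ^ (t + 1 - i) else 0)" for x
  have sg: "simple_graph Vs E" using rg by (simp add: regular_graph_def)
  have fin: "finite I" using fin_dbonds[OF sg] by (simp add: I_def)
  have finW: "finite (walks I t p q)" for p q by (rule finite_walks[OF fin])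
  have R: "rows_on I S" and Co: "cols_on I S" using S_rows[OF sg vm] S_cols[OF sg vm] by (auto simp: I_def S_def)
  have stepA: "(\<Sum>x\<in>walks I t p q. \<Sum>y\<in>walks I t p q. if x \<noteq> y then a x * a y else 0)
      \<le> (\<Sum>x\<in>walks I t p q. (a x)^2 * real (card {y\<in>walks I t p q. y \<noteq> x \<and> amp S y \<noteq> 0}))" for p q
  proof -
    have "(\<Sum>x\<in>walks I t p q. \<Sum>y\<in>walks I t p q. if x \<noteq> y then a x * a y else 0)
      \<le> (\<Sum>x\<in>walks I t p q. \<Sum>y\<in>walks I t p q.
            (if x \<noteq> y \<and> amp S y \<noteq> 0 then (a x)^2 / 2 else 0) + (if x \<noteq> y \<and> amp S x \<noteq> 0 then (a y)^2 / 2 else 0))"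
    proof (intro sum_mono)
      fix x y
      show "(if x \<noteq> y then a x * a y else 0) \<le> (if x \<noteq> y \<and> amp S y \<noteq> 0 then (a x)^2 / 2 else 0) + (if x \<noteq> y \<and> amp S x \<noteq> 0 then (a y)^2 / 2 else 0)"
        using amgm_nz[of "amp S x" "amp S y"] by (auto simp: a_def)
    qed
    also have "\<dots> = (\<Sum>x\<in>walks I t p q. \<Sum>y\<in>walks I t p q. if x \<noteq> y \<and> amp S y \<noteq> 0 then (a x)^2 / 2 else 0)
        + (\<Sum>x\<in>walks I t p q. \<Sum>y\<in>walks I t p q. if x \<noteq> y \<and> amp S x \<noteq> 0 then (a y)^2 / 2 else 0)"
      by (simp add: sum.distrib)
    also have "(\<Sum>x\<in>walks I t p q. \<Sum>y\<in>walks I t p q. if x \<noteq> y \<and> amp S x \<noteq> 0 then (a y)^2 / 2 else 0)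
        = (\<Sum>y\<in>walks I t p q. \<Sum>x\<in>walks I t p q. if y \<noteq> x \<and> amp S x \<noteq> 0 then (a y)^2 / 2 else 0)"
      by (subst sum.swap) (intro sum.cong refl, auto)
    also have "(\<Sum>x\<in>walks I t p q. \<Sum>y\<in>walks I t p q. if x \<noteq> y \<and> amp S y \<noteq> 0 then (a x)^2 / 2 else 0)
      + (\<Sum>y\<in>walks I t p q. \<Sum>x\<in>walks I t p q. if y \<noteq> x \<and> amp S x \<noteq> 0 then (a y)^2 / 2 else 0)
      = (\<Sum>x\<in>walks I t p q. \<Sum>y\<in>walks I t p q. if x \<noteq> y \<and> amp S y \<noteq> 0 then (a x)^2 else 0)"
      by (simp add: sum.distrib[symmetric] if_distrib cong: if_cong)
    also have "\<dots> = (\<Sum>x\<in>walks I t p q. (a x)^2 * real (card {y\<in>walks I t p q. y \<noteq> x \<and> amp S y \<noteq> 0}))"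
    proof (intro sum.cong refl)
      fix x
      have "(\<Sum>y\<in>walks I t p q. if x \<noteq> y \<and> amp S y \<noteq> 0 then (a x)^2 else 0)
          = (a x)^2 * real (card {y\<in>walks I t p q. x \<noteq> y \<and> amp S y \<noteq> 0})"
        by (rule sum_if_const[OF finW])
      also have "{y\<in>walks I t p q. x \<noteq> y \<and> amp S y \<noteq> 0} = {y\<in>walks I t p q. y \<noteq> x \<and> amp S y \<noteq> 0}" by auto
      finally show "(\<Sum>y\<in>walks I t p q. if x \<noteq> y \<and> amp S y \<noteq> 0 then (a x)^2 else 0)
          = (a x)^2 * real (card {y\<in>walks I t p q. y \<noteq> x \<and> amp S y \<noteq> 0})" .
    qed
    finally show ?thesis .
  qed
  have stepB: "(a x)^2 * real (card {y\<in>walks I t p q. y \<noteq> x \<and> amp S y \<noteq> 0}) \<le> (a x)^2 * g x"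
    if x: "x \<in> walks I t p q" for x p q
  proof (cases "amp S x = 0")
    case True then show ?thesis by (simp add: a_def)
  next
    case False
    have "real (card {y\<in>walks I t p q. y \<noteq> x \<and> amp S y \<noteq> 0}) \<le> g x"
      using card_partners[OF rg nb tT, of x p q] x False by (simp add: I_def S_def g_def C_def)
    then show ?thesis by (simp add: mult_left_mono)
  qed
  have "(\<Sum>p\<in>I. \<Sum>q\<in>I. \<Sum>x\<in>walks I t p q. \<Sum>y\<in>walks I t p q. if x \<noteq> y then a x * a y else 0)
      \<le> (\<Sum>p\<in>I. \<Sum>q\<in>I. \<Sum>x\<in>walks I t p q. (a x)^2 * g x)"
  proof (rule sum_mono, rule sum_mono)
    fix p q
    have "(\<Sum>x\<in>walks I t p q. (a x)^2 * real (card {y\<in>walks I t p q. y \<noteq> x \<and> amp S y \<noteq> 0}))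
        \<le> (\<Sum>x\<in>walks I t p q. (a x)^2 * g x)" by (rule sum_mono, rule stepB)
    with stepA[of p q] show "(\<Sum>x\<in>walks I t p q. \<Sum>y\<in>walks I t p q. if x \<noteq> y then a x * a y else 0)
      \<le> (\<Sum>x\<in>walks I t p q. (a x)^2 * g x)" by (rule order_trans)
  qed
  also have "\<dots> = (\<Sum>p\<in>I. \<Sum>q\<in>I. \<Sum>x\<in>walks I t p q. \<Sum>i\<in>{1..t}. real (d - 1) ^ (t + 1 - i) * (if x ! i \<in> C then (a x)^2 else 0))"
    unfolding g_def sum_distrib_left by (intro sum.cong refl) (simp add: mult.commute)
  also have "\<dots> = (\<Sum>i\<in>{1..t}. real (d - 1) ^ (t + 1 - i) * (\<Sum>p\<in>I. \<Sum>q\<in>I. \<Sum>x\<in>walks I t p q. if x ! i \<in> C then (a x)^2 else 0))"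
  proof -
    have "(\<Sum>p\<in>I. \<Sum>q\<in>I. \<Sum>x\<in>walks I t p q. \<Sum>i\<in>{1..t}. real (d - 1) ^ (t + 1 - i) * (if x ! i \<in> C then (a x)^2 else 0))
       = (\<Sum>p\<in>I. \<Sum>q\<in>I. \<Sum>i\<in>{1..t}. \<Sum>x\<in>walks I t p q. real (d - 1) ^ (t + 1 - i) * (if x ! i \<in> C then (a x)^2 else 0))"
      by (rule sum.cong[OF refl], rule sum.cong[OF refl], rule sum.swap)
    also have "\<dots> = (\<Sum>p\<in>I. \<Sum>i\<in>{1..t}. \<Sum>q\<in>I. \<Sum>x\<in>walks I t p q. real (d - 1) ^ (t + 1 - i) * (if x ! i \<in> C then (a x)^2 else 0))"
      by (rule sum.cong[OF refl], rule sum.swap)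
    also have "\<dots> = (\<Sum>i\<in>{1..t}. \<Sum>p\<in>I. \<Sum>q\<in>I. \<Sum>x\<in>walks I t p q. real (d - 1) ^ (t + 1 - i) * (if x ! i \<in> C then (a x)^2 else 0))"
      by (rule sum.swap)
    finally show ?thesis by (simp add: sum_distrib_left)
  qed
  also have "\<dots> = (\<Sum>i\<in>{1..t}. real (d - 1) ^ (t + 1 - i) * real (card C))"
  proof (intro sum.cong refl)
    fix i assume "i \<in> {1..t}"
    then have "i \<le> t" by simp
    then show "real (d - 1) ^ (t + 1 - i) * (\<Sum>p\<in>I. \<Sum>q\<in>I. \<Sum>x\<in>walks I t p q. if x ! i \<in> C then (a x)^2 else 0)
        = real (d - 1) ^ (t + 1 - i) * real (card C)"
      using weight_C[OF fin R Co _ \<open>i \<le> t\<close>, of C] unfolding a_def C_def by simp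
  qed
  also have "\<dots> = real (card C) * (\<Sum>i\<in>{1..t}. real (d - 1) ^ (t + 1 - i))"
    by (simp add: sum_distrib_left mult.commute)
  finally have X: "(\<Sum>p\<in>I. \<Sum>q\<in>I. \<Sum>x\<in>walks I t p q. \<Sum>y\<in>walks I t p q. if x \<noteq> y then a x * a y else 0)
      \<le> real (card C) * (\<Sum>i\<in>{1..t}. real (d - 1) ^ (t + 1 - i))" .
  show ?thesis using X unfolding a_def I_def S_def C_def by simp
qed



lemma Re_sym: "Re (z * cnj w) = Re (w * cnj z)"
  by simp

lemma Re_cnj_swap: "Re (cnj z * w) = Re (z * cnj w)"
  by simp

lemma Qm_split:
  assumes fin: "finite I" and a: "a \<in> I"
  shows "Qm I L S t a a' = cpw I (\<lambda>b c. (cmod (S b c))^2) t a a'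
     + (\<Sum>x\<in>walks I t a a'. \<Sum>y\<in>walks I t a a'. if x \<noteq> y \<and> wlen L x = wlen L y then Re (amp S x * cnj (amp S y)) else 0)"
proof -
  have "Qm I L S t a a' = (\<Sum>x\<in>walks I t a a'. \<Sum>y\<in>walks I t a a'.
       (if x = y then (cmod (amp S x))^2 else 0) + (if x \<noteq> y \<and> wlen L x = wlen L y then Re (amp S x * cnj (amp S y)) else 0))"
    unfolding Qm_def by (intro sum.cong refl) (auto simp: cmod_sq_Re)
  also have "\<dots> = (\<Sum>x\<in>walks I t a a'. (cmod (amp S x))^2)
     + (\<Sum>x\<in>walks I t a a'. \<Sum>y\<in>walks I t a a'. if x \<noteq> y \<and> wlen L x = wlen L y then Re (amp S x * cnj (amp S y)) else 0)"
    using finite_walks[OF fin] by (simp add: sum.distrib)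
  also have "(\<Sum>x\<in>walks I t a a'. (cmod (amp S x))^2) = cpw I (\<lambda>b c. (cmod (S b c))^2) t a a'"
    by (simp add: cpw_walks[OF fin a] amp_M)
  finally show ?thesis .
qed

lemma off_abs:
  "\<bar>(\<Sum>x\<in>W. \<Sum>y\<in>W. if x \<noteq> y \<and> P x y then Re (A x * cnj (A y)) else 0)\<bar>
    \<le> (\<Sum>x\<in>W. \<Sum>y\<in>W. if x \<noteq> y then cmod (A x) * cmod (A y) else 0)"
proof -
  have "\<bar>(\<Sum>x\<in>W. \<Sum>y\<in>W. if x \<noteq> y \<and> P x y then Re (A x * cnj (A y)) else 0)\<bar>
      \<le> (\<Sum>x\<in>W. \<bar>\<Sum>y\<in>W. if x \<noteq> y \<and> P x y then Re (A x * cnj (A y)) else 0\<bar>)" by (rule sum_abs)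
  also have "\<dots> \<le> (\<Sum>x\<in>W. \<Sum>y\<in>W. \<bar>if x \<noteq> y \<and> P x y then Re (A x * cnj (A y)) else 0\<bar>)"
    by (intro sum_mono sum_abs)
  also have "\<dots> \<le> (\<Sum>x\<in>W. \<Sum>y\<in>W. if x \<noteq> y then cmod (A x) * cmod (A y) else 0)"
  proof (intro sum_mono)
    fix x y
    have "\<bar>Re (A x * cnj (A y))\<bar> \<le> cmod (A x * cnj (A y))" by (rule abs_Re_le_cmod)
    also have "\<dots> = cmod (A x) * cmod (A y)" by (simp add: norm_mult)
    finally show "\<bar>if x \<noteq> y \<and> P x y then Re (A x * cnj (A y)) else 0\<bar> \<le> (if x \<noteq> y then cmod (A x) * cmod (A y) else 0)"
      by auto
  qed
  finally show ?thesis .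
qed

lemma QB:
  assumes rg: "regular_graph Vs E d" and vm: "vertex_matrices_ok Vs E \<sigma>" and nb: "no_backscattering Vs E \<sigma>"
    and tT: "t \<le> T" and fk: "\<forall>b\<in>dbonds E. cmod (f b) \<le> \<kappa>"
  shows "(\<Sum>a\<in>dbonds E. \<Sum>a'\<in>dbonds E. Re (f a * cnj (f a')) * Qm (dbonds E) L (Smat \<sigma>) t a a')
     \<le> Re (cinner (dbonds E) f (\<lambda>b. \<Sum>c\<in>dbonds E. complex_of_real (mpow (dbonds E) (Mmat \<sigma>) t b c) * f c))
       + \<kappa>^2 * (real (card {e\<in>dbonds E. ubond e \<in> cycle_bonds E (2 * T)}) * (\<Sum>i\<in>{1..t}. real (d - 1) ^ (t + 1 - i)))"
proof -
  define I where "I = dbonds E"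
  define S where "S = Smat \<sigma>"
  define Of where "Of a a' = (\<Sum>x\<in>walks I t a a'. \<Sum>y\<in>walks I t a a'. if x \<noteq> y \<and> wlen L x = wlen L y then Re (amp S x * cnj (amp S y)) else 0)" for a a'
  define D where "D a a' = (\<Sum>x\<in>walks I t a a'. \<Sum>y\<in>walks I t a a'. if x \<noteq> y then cmod (amp S x) * cmod (amp S y) else 0)" for a a'
  define Mt where "Mt = mpow I (Mmat \<sigma>) t"
  have sg: "simple_graph Vs E" using rg by (simp add: regular_graph_def)
  have fin: "finite I" using fin_dbonds[OF sg] by (simp add: I_def)
  have Mf: "Mmat \<sigma> = (\<lambda>b c. (cmod (S b c))^2)" by (intro ext) (simp add: Mmat_def S_def)
  have Mt: "Mt = cpw I (\<lambda>b c. (cmod (S b c))^2) t" by (simp add: Mt_def mpow_cpw Mf)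
  have split: "Qm I L S t a a' = Mt a a' + Of a a'" if "a \<in> I" for a a'
    using Qm_split[OF fin that] by (simp add: Mt Of_def)
  have ReF: "Re (f a * cnj (f a')) * Of a a' \<le> \<kappa>^2 * D a a'" if "a \<in> I" "a' \<in> I" for a a'
  proof -
    have k0: "0 \<le> \<kappa>" using fk that(1) norm_ge_zero[of "f a"] unfolding I_def by (meson order_trans)
    have "\<bar>Re (f a * cnj (f a'))\<bar> \<le> cmod (f a * cnj (f a'))" by (rule abs_Re_le_cmod)
    also have "\<dots> = cmod (f a) * cmod (f a')" by (simp add: norm_mult)
    also have "\<dots> \<le> \<kappa> * \<kappa>" using fk that k0 by (intro mult_mono) (auto simp: I_def)
    finally have k: "\<bar>Re (f a * cnj (f a'))\<bar> \<le> \<kappa>^2" by (simp add: power2_eq_square)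
    have o: "\<bar>Of a a'\<bar> \<le> D a a'" unfolding Of_def D_def by (rule off_abs)
    have "Re (f a * cnj (f a')) * Of a a' \<le> \<bar>Re (f a * cnj (f a'))\<bar> * \<bar>Of a a'\<bar>"
      by (metis abs_ge_self abs_mult)
    also have "\<dots> \<le> \<kappa>^2 * D a a'" using k o by (intro mult_mono) auto
    finally show ?thesis .
  qed
  have "(\<Sum>a\<in>I. \<Sum>a'\<in>I. Re (f a * cnj (f a')) * Qm I L S t a a')
      = (\<Sum>a\<in>I. \<Sum>a'\<in>I. Re (f a * cnj (f a')) * Mt a a') + (\<Sum>a\<in>I. \<Sum>a'\<in>I. Re (f a * cnj (f a')) * Of a a')"
    using split by (simp add: sum.distrib distrib_left)
  also have "(\<Sum>a\<in>I. \<Sum>a'\<in>I. Re (f a * cnj (f a')) * Of a a') \<le> (\<Sum>a\<in>I. \<Sum>a'\<in>I. \<kappa>^2 * D a a')"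
    using ReF by (intro sum_mono) auto
  also have "(\<Sum>a\<in>I. \<Sum>a'\<in>I. \<kappa>^2 * D a a') = \<kappa>^2 * (\<Sum>a\<in>I. \<Sum>a'\<in>I. D a a')"
    by (simp add: sum_distrib_left)
  also have "(\<Sum>a\<in>I. \<Sum>a'\<in>I. D a a') \<le> real (card {e\<in>dbonds E. ubond e \<in> cycle_bonds E (2 * T)}) * (\<Sum>i\<in>{1..t}. real (d - 1) ^ (t + 1 - i))"
    using Dd_bound[OF rg vm nb tT] unfolding D_def I_def S_def by simp
  also have "(\<Sum>a\<in>I. \<Sum>a'\<in>I. Re (f a * cnj (f a')) * Mt a a') = Re (cinner I f (\<lambda>b. \<Sum>c\<in>I. complex_of_real (Mt b c) * f c))"
    by (simp add: cinner_def sum_distrib_left Re_sum) (simp add: algebra_simps)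
  finally show ?thesis by (simp add: I_def S_def Mt_def mult_left_mono)
qed



definition good :: "(real \<Rightarrow> real) \<Rightarrow> real \<Rightarrow> bool" where
  "good g L \<longleftrightarrow> (\<forall>a b. g integrable_on {a..b}) \<and> ((\<lambda>K. mean g K) \<longlongrightarrow> L) at_top"

lemma good_sum:
  assumes fin: "finite S" and g: "\<And>m. m \<in> S \<Longrightarrow> good (g m) (L m)"
  shows "good (\<lambda>k. \<Sum>m\<in>S. g m k) (\<Sum>m\<in>S. L m)"
  unfolding good_def
proof
  show "\<forall>a b. (\<lambda>k. \<Sum>m\<in>S. g m k) integrable_on {a..b}"
    using g fin by (auto simp: good_def intro!: integrable_sum)
  show "((\<lambda>K. mean (\<lambda>k. \<Sum>m\<in>S. g m k) K) \<longlongrightarrow> (\<Sum>m\<in>S. L m)) at_top"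
    using g by (intro mean_sum[OF fin]) (auto simp: good_def)
qed

lemma good_cmult:
  assumes "good g L" shows "good (\<lambda>k. c * g k) (c * L)"
  using assms unfolding good_def
proof (intro conjI allI)
  fix a b assume "(\<forall>a b. g integrable_on {a..b}) \<and> ((\<lambda>K. mean g K) \<longlongrightarrow> L) at_top"
  then have "g integrable_on {a..b}" by blast
  from integrable_cmul[OF this, of c] show "(\<lambda>k. c * g k) integrable_on {a..b}" by simp
next
  assume "(\<forall>a b. g integrable_on {a..b}) \<and> ((\<lambda>K. mean g K) \<longlongrightarrow> L) at_top"
  then show "((\<lambda>K. mean (\<lambda>k. c * g k) K) \<longlongrightarrow> c * L) at_top" by (intro mean_cmult) blast
qed

lemma diag_sum:
  fixes G :: "nat \<Rightarrow> real"
  shows "(\<Sum>s<T. \<Sum>s'<T. G (if s' \<le> s then s - s' else s' - s)) = real T * G 0 + 2 * (\<Sum>t\<in>{1..T}. real (T - t) * G t)"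
proof (induction T)
  case 0 then show ?case by simp
next
  case (Suc T)
  have rev: "(\<Sum>s<T. G (T - s)) = (\<Sum>t\<in>{1..T}. G t)"
  proof -
    have "(\<Sum>s<T. G (T - s)) = (\<Sum>s<T. (\<lambda>i. G (Suc i)) (T - Suc s))"
      by (intro sum.cong refl) (simp add: Suc_diff_Suc)
    also have "\<dots> = (\<Sum>s<T. G (Suc s))" by (rule sum.nat_diff_reindex)
    also have "\<dots> = (\<Sum>t\<in>{1..T}. G t)" by (simp add: sum.atLeast1_atMost_eq)
    finally show ?thesis .
  qed
  have "(\<Sum>s<Suc T. \<Sum>s'<Suc T. G (if s' \<le> s then s - s' else s' - s))
      = (\<Sum>s<T. \<Sum>s'<T. G (if s' \<le> s then s - s' else s' - s)) + (\<Sum>s<T. G (T - s)) + (\<Sum>s'<T. G (T - s')) + G 0"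
    by (simp add: sum.distrib)
  also have "\<dots> = real T * G 0 + 2 * (\<Sum>t\<in>{1..T}. real (T - t) * G t) + 2 * (\<Sum>t\<in>{1..T}. G t) + G 0"
    using Suc.IH rev by simp
  also have "\<dots> = real (Suc T) * G 0 + 2 * (\<Sum>t\<in>{1..Suc T}. real (Suc T - t) * G t)"
  proof -
    have "(\<Sum>t\<in>{1..Suc T}. real (Suc T - t) * G t) = (\<Sum>t\<in>{1..T}. real (Suc T - t) * G t)"
      by simp
    also have "\<dots> = (\<Sum>t\<in>{1..T}. real (T - t) * G t) + (\<Sum>t\<in>{1..T}. G t)"
      by (simp add: sum.distrib[symmetric] Suc_diff_le of_nat_Suc algebra_simps)
    finally show ?thesis by (simp add: algebra_simps)
  qed
  finally show ?case .
qed

lemma card_C':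
  assumes sg: "simple_graph Vs E"
  shows "card {e\<in>dbonds E. ubond e \<in> cycle_bonds E n} \<le> 2 * card (cycle_bonds E n)"
proof -
  define C where "C = cycle_bonds E n"
  have finI: "finite (dbonds E)" by (rule fin_dbonds[OF sg])
  have CU: "C \<subseteq> ubond ` dbonds E"
    by (auto simp: C_def cycle_bonds_def is_cycle_def)
  have finC: "finite C" using CU finI finite_subset by blast
  have sub: "{e\<in>dbonds E. ubond e \<in> C} \<subseteq> (\<Union>x\<in>C. {e\<in>dbonds E. ubond e = x})" by auto
  have fib: "card {e\<in>dbonds E. ubond e = x} \<le> 2" for x
  proof (cases "{e\<in>dbonds E. ubond e = x} = {}")
    case True show ?thesis by (subst True) simp
  next
    case False
    then obtain e0 where e0: "e0 \<in> dbonds E" "ubond e0 = x" by auto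
    have "{e\<in>dbonds E. ubond e = x} \<subseteq> {e0, rv e0}"
    proof
      fix e assume e: "e \<in> {e\<in>dbonds E. ubond e = x}"
      then have "{fst e, snd e} = {fst e0, snd e0}" using e0 by (simp add: ubond_def)
      then have "e = e0 \<or> e = rv e0" by (auto simp: doubleton_eq_iff rv_def prod_eq_iff)
      then show "e \<in> {e0, rv e0}" by auto
    qed
    then have "card {e\<in>dbonds E. ubond e = x} \<le> card {e0, rv e0}" by (rule card_mono[rotated]) simp
    also have "\<dots> \<le> 2" by (simp add: card_insert_le_m1)
    finally show ?thesis .
  qed
  have "card {e\<in>dbonds E. ubond e \<in> C} \<le> card (\<Union>x\<in>C. {e\<in>dbonds E. ubond e = x})"
    by (rule card_mono[OF _ sub]) (use finC finI in auto)
  also have "\<dots> \<le> (\<Sum>x\<in>C. card {e\<in>dbonds E. ubond e = x})" by (rule card_UN_le[OF finC])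
  also have "\<dots> \<le> (\<Sum>x\<in>C. 2)" by (rule sum_mono[OF fib])
  finally show ?thesis by (simp add: C_def mult.commute)
qed

lemma w_hat_eq: "1 \<le> t \<Longrightarrow> t \<le> T \<Longrightarrow> w_hat T (int t) = real (T - t) / (real T)^2"
  by (auto simp: w_hat_def field_simps power2_eq_square of_nat_diff)



lemma Umat_Uk: "Umat \<sigma> Lu k = Uk (\<lambda>b. Lu (ubond b)) (Smat \<sigma>) k"
  by (intro ext) (simp add: Umat_def Uk_def cis_conv_exp mult.commute)

lemma main:
  fixes T :: nat and \<kappa> :: real and f :: "nat \<times> nat \<Rightarrow> complex" and \<phi> :: "real \<Rightarrow> nat \<Rightarrow> nat \<times> nat \<Rightarrow> complex"
  assumes d3: "d \<ge> 3" and rg: "regular_graph Vs E d" and vm: "vertex_matrices_ok Vs E \<sigma>"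
    and nb: "no_backscattering Vs E \<sigma>" and Tpos: "T > 0"
    and fk: "\<forall>b\<in>dbonds E. cmod (f b) \<le> \<kappa>" and tr: "Tr_Op (dbonds E) f = 0"
    and eig: "\<forall>k. orthonormal_eigenbasis (dbonds E) (2 * nbonds E) (Umat \<sigma> Lu k) (\<phi> k)"
    and intg: "\<forall>K\<ge>0. var_integrand (dbonds E) (2 * nbonds E) f \<phi> integrable_on {0..K}"
    and lim: "((\<lambda>K. (1 / K) * integral {0..K} (var_integrand (dbonds E) (2 * nbonds E) f \<phi>)) \<longlongrightarrow> Vlim) at_top"
  shows "Vlim / (2 * real (nbonds E))
         \<le> (1 / (2 * real (nbonds E) * real T)) * (\<Sum>b\<in>dbonds E. (cmod (f b))\<^sup>2)
           + (1 / real (nbonds E)) *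
             (\<Sum>t=1..T. w_hat T (int t) *
                (Re (cinner (dbonds E) f
                       (\<lambda>b. \<Sum>c\<in>dbonds E. complex_of_real (mpow (dbonds E) (Mmat \<sigma>) t b c) * f c))
                 + 4 * \<kappa>\<^sup>2 * (real d - 1) ^ t * real (card (cycle_bonds E (2 * T)))))"
proof -
  define I where "I = dbonds E"
  define S where "S = Smat \<sigma>"
  define L where "L = (\<lambda>b. Lu (ubond b))"
  define n where "n = 2 * nbonds E"
  define U where "U = Uk L S"
  have sg: "simple_graph Vs E" using rg by (simp add: regular_graph_def)
  have fin: "finite I" using fin_dbonds[OF sg] by (simp add: I_def)
  have R0: "rows_on I S" and C0: "cols_on I S" using S_rows[OF sg vm] S_cols[OF sg vm] by (auto simp: I_def S_def)
  have Rk: "rows_on I (U k)" and Ck: "cols_on I (U k)" for k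
    using rows_Uk[OF R0] cols_Uk[OF C0] by (auto simp: U_def)
  have UU: "Umat \<sigma> Lu k = U k" for k by (simp add: Umat_Uk U_def L_def S_def)
  define Hterm where "Hterm k s s' a a' = (if s' \<le> s then (cmod (cpw I (U k) (s - s') a a'))^2 else (cmod (cpw I (U k) (s' - s) a' a))^2)" for k s s' a a'
  define Qterm where "Qterm s s' a a' = (if s' \<le> s then Qm I L S (s - s') a a' else Qm I L S (s' - s) a' a)" for s s' a a'
  define hf where "hf k = (1 / (real T)^2) * (\<Sum>s<T. \<Sum>s'<T. \<Sum>a\<in>I. \<Sum>a'\<in>I. Re (f a * cnj (f a')) * Hterm k s s' a a')" for k
  define W where "W = (1 / (real T)^2) * (\<Sum>s<T. \<Sum>s'<T. \<Sum>a\<in>I. \<Sum>a'\<in>I. Re (f a * cnj (f a')) * Qterm s s' a a')"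
  have Hgood: "good (\<lambda>k. Hterm k s s' a a') (Qterm s s' a a')" if "a \<in> I" "a' \<in> I" for s s' a a'
  proof (cases "s' \<le> s")
    case True
    then show ?thesis using that unfolding Hterm_def Qterm_def good_def U_def
      by (simp add: int_Pk[OF fin] mean_Pk[OF fin])
  next
    case False
    then show ?thesis using that unfolding Hterm_def Qterm_def good_def U_def
      by (simp add: int_Pk[OF fin] mean_Pk[OF fin])
  qed
  have hgood: "good hf W"
    unfolding hf_def[abs_def] W_def
    by (intro good_cmult good_sum finite_lessThan fin Hgood) auto
  have pw: "var_integrand I n f \<phi> k \<le> hf k" for k
  proof -
    have ob: "orthonormal_eigenbasis I n (U k) (\<phi> k)" using eig UU by (simp add: I_def n_def)
    have on: "\<forall>j<n. \<forall>j'<n. cinner I (\<phi> k j) (\<phi> k j') = (if j = j' then 1 else 0)"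
      and ev: "\<forall>j<n. \<exists>l. \<forall>b\<in>I. (\<Sum>c\<in>I. U k b c * \<phi> k j c) = l * \<phi> k j b"
      using ob by (auto simp: orthonormal_eigenbasis_def)
    have "var_integrand I n f \<phi> k = (\<Sum>j<n. (cmod (cinner I (\<phi> k j) (Op f (\<phi> k j))))^2)"
      using tr by (simp add: var_integrand_def I_def)
    also have "\<dots> \<le> (1 / (real T)^2) * (\<Sum>s<T. \<Sum>s'<T. \<Sum>a\<in>I. \<Sum>a'\<in>I. Re (f a * cnj (f a')) *
          (cmod (mm I (cpw I (U k) s) (adj (cpw I (U k) s')) a a'))^2)"
      by (rule pointwise[OF fin Rk Ck on ev Tpos])
    also have "\<dots> = hf k"
      unfolding hf_def
    proof (intro arg_cong[where f="\<lambda>x. (1 / (real T)^2) * x"] sum.cong refl)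
      fix s s' a a' assume a: "a \<in> I" and a': "a' \<in> I"
      show "Re (f a * cnj (f a')) * (cmod (mm I (cpw I (U k) s) (adj (cpw I (U k) s')) a a'))^2 = Re (f a * cnj (f a')) * Hterm k s s' a a'"
        using X_formula[OF fin Rk[of k] a a', where s=s and s'=s'] by (simp add: Hterm_def)
    qed
    finally show ?thesis .
  qed
  have VW: "Vlim \<le> W"
  proof (rule mean_le)
    show "var_integrand I n f \<phi> integrable_on {0..K}" if "K \<ge> 0" for K using intg that by (simp add: I_def n_def)
    show "hf integrable_on {0..K}" for K using hgood by (simp add: good_def)
    show "var_integrand I n f \<phi> k \<le> hf k" for k by (rule pw)
    show "((\<lambda>K. mean (var_integrand I n f \<phi>) K) \<longlongrightarrow> Vlim) at_top" using lim by (simp add: mean_def I_def n_def)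
    show "((\<lambda>K. mean hf K) \<longlongrightarrow> W) at_top" using hgood by (simp add: good_def)
  qed
  define F where "F t = Re (cinner I f (\<lambda>b. \<Sum>c\<in>I. complex_of_real (mpow I (Mmat \<sigma>) t b c) * f c))" for t
  define CC where "CC = card {e\<in>I. ubond e \<in> cycle_bonds E (2 * T)}"
  define geo where "geo t = (\<Sum>i\<in>{1..t}. real (d - 1) ^ (t + 1 - i))" for t
  define G where "G t = F t + \<kappa>^2 * (real CC * geo t)" for t
  have QB1: "(\<Sum>a\<in>I. \<Sum>a'\<in>I. Re (f a * cnj (f a')) * Qm I L S t a a') \<le> G t" if "t \<le> T" for t
    using QB[OF rg vm nb that fk, of L] by (simp add: G_def F_def CC_def geo_def I_def S_def)
  have QB2: "(\<Sum>a\<in>I. \<Sum>a'\<in>I. Re (f a * cnj (f a')) * Qm I L S t a' a) \<le> G t" if "t \<le> T" for t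
  proof -
    have "(\<Sum>a\<in>I. \<Sum>a'\<in>I. Re (f a * cnj (f a')) * Qm I L S t a' a) = (\<Sum>a'\<in>I. \<Sum>a\<in>I. Re (f a * cnj (f a')) * Qm I L S t a' a)"
      by (rule sum.swap)
    also have "\<dots> = (\<Sum>a'\<in>I. \<Sum>a\<in>I. Re (f a' * cnj (f a)) * Qm I L S t a' a)"
      by (intro sum.cong refl) (simp add: mult.commute)
    finally show ?thesis using QB1[OF that] by simp
  qed
  have inner: "(\<Sum>a\<in>I. \<Sum>a'\<in>I. Re (f a * cnj (f a')) * Qterm s s' a a') \<le> G (if s' \<le> s then s - s' else s' - s)"
    if "s < T" "s' < T" for s s'
    using that QB1[of "s - s'"] QB2[of "s' - s"] by (auto simp: Qterm_def)
  have WG: "W \<le> (1 / (real T)^2) * (real T * G 0 + 2 * (\<Sum>t\<in>{1..T}. real (T - t) * G t))"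
  proof -
    have "(\<Sum>s<T. \<Sum>s'<T. \<Sum>a\<in>I. \<Sum>a'\<in>I. Re (f a * cnj (f a')) * Qterm s s' a a')
        \<le> (\<Sum>s<T. \<Sum>s'<T. G (if s' \<le> s then s - s' else s' - s))"
      using inner by (intro sum_mono) auto
    also have "\<dots> = real T * G 0 + 2 * (\<Sum>t\<in>{1..T}. real (T - t) * G t)" by (rule diag_sum)
    finally show ?thesis unfolding W_def by (simp add: divide_right_mono)
  qed
  have G0: "G 0 = (\<Sum>b\<in>I. (cmod (f b))^2)"
  proof -
    have "(\<lambda>b. \<Sum>c\<in>I. complex_of_real (mpow I (Mmat \<sigma>) 0 b c) * f c) b = f b" if "b \<in> I" for b
      using fin that by (subst sum.cong[OF refl, of _ _ "\<lambda>c. if b = c then f c else 0"]) auto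
    then have "cinner I f (\<lambda>b. \<Sum>c\<in>I. complex_of_real (mpow I (Mmat \<sigma>) 0 b c) * f c) = cinner I f f"
      unfolding cinner_def by (intro sum.cong refl) simp
    then show ?thesis by (simp add: G_def F_def geo_def cinner_self)
  qed
  have Gt: "real (T - t) / (real T)^2 * G t \<le> w_hat T (int t) * (F t + 4 * \<kappa>\<^sup>2 * (real d - 1) ^ t * real (card (cycle_bonds E (2 * T))))"
    if t: "t \<in> {1..T}" for t
  proof -
    have w: "w_hat T (int t) = real (T - t) / (real T)^2" using t by (simp add: w_hat_eq)
    have CCb: "real CC \<le> 2 * real (card (cycle_bonds E (2 * T)))"
      using card_C'[OF sg, of "2 * T"] by (simp add: CC_def I_def)
    have r: "real (d - 1) = real d - 1" using d3 by simp
    have r2: "real (d - 1) \<ge> 2" using d3 by linarith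
    have "geo t \<le> 2 * real (d - 1) ^ t" unfolding geo_def by (rule geom_bound[OF r2])
    then have geob: "geo t \<le> 2 * (real d - 1) ^ t" by (simp only: r)
    have "real CC * geo t \<le> (2 * real (card (cycle_bonds E (2 * T)))) * (2 * (real d - 1) ^ t)"
      using CCb geob by (intro mult_mono) (auto simp: geo_def intro: sum_nonneg)
    then have "\<kappa>^2 * (real CC * geo t) \<le> \<kappa>^2 * ((2 * real (card (cycle_bonds E (2 * T)))) * (2 * (real d - 1) ^ t))"
      by (simp add: mult_left_mono)
    then have "G t \<le> F t + 4 * \<kappa>\<^sup>2 * (real d - 1) ^ t * real (card (cycle_bonds E (2 * T)))"
      by (simp add: G_def algebra_simps)
    then show ?thesis unfolding w by (rule mult_left_mono) simp
  qed
  show ?thesis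
  proof (cases "nbonds E = 0")
    case True then show ?thesis by simp
  next
    case False
    define B where "B = real (nbonds E)"
    have B0: "B > 0" using False by (simp add: B_def)
    have "Vlim / (2 * B) \<le> W / (2 * B)" using VW B0 by (simp add: divide_right_mono)
    also have "\<dots> \<le> (1 / (real T)^2) * (real T * G 0 + 2 * (\<Sum>t\<in>{1..T}. real (T - t) * G t)) / (2 * B)"
      using divide_right_mono[OF WG, of "2 * B"] B0 by simp
    also have "\<dots> = (1 / (2 * B * real T)) * (\<Sum>b\<in>I. (cmod (f b))^2) + (1 / B) * (\<Sum>t\<in>{1..T}. real (T - t) / (real T)^2 * G t)"
    proof -
      define P where "P = (\<Sum>b\<in>I. (cmod (f b))^2)"
      define Q where "Q = (\<Sum>t\<in>{1..T}. real (T - t) * G t)"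
      have Qeq: "(\<Sum>t\<in>{1..T}. real (T - t) / (real T)^2 * G t) = Q / (real T)^2"
        unfolding Q_def by (simp add: sum_divide_distrib)
      have "(1 / (real T)^2) * (real T * P + 2 * Q) / (2 * B) = (1 / (2 * B * real T)) * P + (1 / B) * (Q / (real T)^2)"
        using B0 Tpos by (simp add: field_simps power2_eq_square)
      then show ?thesis unfolding Qeq by (simp add: G0 P_def Q_def)
    qed
    also have "\<dots> \<le> (1 / (2 * B * real T)) * (\<Sum>b\<in>I. (cmod (f b))^2) + (1 / B) * (\<Sum>t\<in>{1..T}. w_hat T (int t) * (F t + 4 * \<kappa>\<^sup>2 * (real d - 1) ^ t * real (card (cycle_bonds E (2 * T)))))"
      using B0 Gt by (intro add_left_mono mult_left_mono sum_mono) auto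
    finally show ?thesis by (simp add: B_def I_def F_def)
  qed
qed

theorem proposition4:
  "\<forall>d::nat. d \<ge> 3 \<longrightarrow> (\<exists>c::real.
     \<forall>(Vs::nat set) (E::nat \<Rightarrow> nat \<Rightarrow> bool) (\<sigma>::nat \<Rightarrow> nat \<Rightarrow> nat \<Rightarrow> complex)
       (Lu::nat set \<Rightarrow> real) (T::nat) (\<kappa>::real) (f::nat \<times> nat \<Rightarrow> complex)
       (\<phi>::real \<Rightarrow> nat \<Rightarrow> nat \<times> nat \<Rightarrow> complex) (Vlim::real).
       regular_graph Vs E d \<longrightarrow>
       vertex_matrices_ok Vs E \<sigma> \<longrightarrow>
       no_backscattering Vs E \<sigma> \<longrightarrow>
       (\<forall>e\<in>ubonds E. Lu e > 0) \<longrightarrow>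
       rationally_independent (ubonds E) Lu \<longrightarrow>
       T > 0 \<longrightarrow> \<kappa> > 0 \<longrightarrow>
       (\<forall>b\<in>dbonds E. cmod (f b) \<le> \<kappa>) \<longrightarrow>
       Tr_Op (dbonds E) f = 0 \<longrightarrow>
       (\<forall>k. orthonormal_eigenbasis (dbonds E) (2 * nbonds E) (Umat \<sigma> Lu k) (\<phi> k)) \<longrightarrow>
       (\<forall>K\<ge>0. var_integrand (dbonds E) (2 * nbonds E) f \<phi> integrable_on {0..K}) \<longrightarrow>
       ((\<lambda>K. (1 / K) * integral {0..K} (var_integrand (dbonds E) (2 * nbonds E) f \<phi>))
          \<longlongrightarrow> Vlim) at_top \<longrightarrow>
       Vlim / (2 * real (nbonds E))
         \<le> (1 / (2 * real (nbonds E) * real T)) * (\<Sum>b\<in>dbonds E. (cmod (f b))\<^sup>2)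
           + (1 / real (nbonds E)) *
             (\<Sum>t=1..T. w_hat T (int t) *
                (Re (cinner (dbonds E) f
                       (\<lambda>b. \<Sum>c\<in>dbonds E. complex_of_real (mpow (dbonds E) (Mmat \<sigma>) t b c) * f c))
                 + c * \<kappa>\<^sup>2 * (real d - 1) ^ t * real (card (cycle_bonds E (2 * T))))))"
  apply (intro allI impI)
  apply (rule exI[of _ 4])
  apply (intro allI impI)
  apply (rule main)
            apply assumption+
  done


end
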